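(* Let $M$ be a smooth manifold of dimension $n\geq 2$ and let $F$ be a Finsler structure on $M$ whose $\chi$-curvature vanishes identically on $T_0M$. Let $\mathcal{E}^i_j=2F g^{ik}E_{kj}$ and write its characteristic polynomial as $\det\left(\mathcal{E}^i_j+\Lambda\delta^i_j\right)=\sum_{a=0}^{n} g_a\Lambda^{n-a}$ (so $g_0=1$ and $g_n=0$). Then the $n-1$ functions $$f_a=\operatorname{Tr}\left(\mathcal{E}^a\right),\qquad a\in\{1,2,\dots,n-1\},$$ and the coefficients $g_a$, $a\in\{1,\dots,n-1\}$, are $0$-homogeneous first integrals of the geodesic spray $G$, i.e. $G(f_a)=0$ and $G(g_a)=0$ for all $a\in\{1,\dots,n-1\}$.
   Context: $M$ is a smooth $n$-manifold, $T_0M=TM\setminus\{0\}$, with induced coordinates $(x^i,y^i)$. A Finsler structure is a function $F:TM\to[0,\infty)$, continuous, positively $1$-homogeneous in $y$, smooth on $T_0M$, such that $g_{ij}=\frac12\frac{\partial^2F^2}{\partial y^i\partial y^j}$ is non-degenerate on $T_0M$; $g^{ij}$ denotes the inverse matrix. The geodesic spray is $G=y^i\frac{\partial}{\partial x^i}-2G^i\frac{\partial}{\partial y^i}$ with $G^i=\frac14 g^{ij}\left(\frac{\partial^2F^2}{\partial y^j\partial x^k}y^k-\frac{\partial F^2}{\partial x^j}\right)$. The Berwald curvature is $B^i_{jkl}=\frac{\partial^3G^i}{\partial y^j\partial y^k\partial y^l}$ and the mean Berwald curvature is $E_{ij}=\frac12 B^k_{ijk}$. $\mathcal{E}$ is viewed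 as the $n\times n$ matrix-valued function $(\mathcal{E}^i_j)$ on $T_0M$, $\mathcal{E}^a$ is its $a$-th matrix power and $\operatorname{Tr}$ the matrix trace. Fix a volume form $\sigma(x)\,dx\wedge dy$ on $TM$ with $\sigma$ depending only on $x$; the distortion is $\tau=\frac12\ln\frac{\det(g_{ij})}{\sigma}$ and the $S$-function is $S=G(\tau)$. The $\chi$-curvature is the $1$-form $\chi=\frac12\left\{G\left(\frac{\partial S}{\partial y^i}\right)-\frac{\partial S}{\partial x^i}\right\}dx^i$. A function $f$ on $T_0M$ is a first integral of $G$ if $G(f)=0$. *)

theory Defs
  imports "HOL-Analysis.Analysis"
begin

text \<open>Local (chart) setting: M is an open set U of real^'n, n = CARD('n);
 a point of TM is a pair (x,y) with x in U, y in real^'n.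
 Functions on TM are curried functions real^'n => real^'n => real.\<close>

type_synonym 'n tfun = "real^'n \<Rightarrow> real^'n \<Rightarrow> real"

definition dx :: "'n::finite \<Rightarrow> 'n tfun \<Rightarrow> 'n tfun" where
  "dx i f x y = deriv (\<lambda>t. f (x + t *\<^sub>R axis i 1) y) 0"

definition dy :: "'n::finite \<Rightarrow> 'n tfun \<Rightarrow> 'n tfun" where
  "dy i f x y = deriv (\<lambda>t. f x (y + t *\<^sub>R axis i 1)) 0"

fun apply_ops :: "('n::finite + 'n) list \<Rightarrow> 'n tfun \<Rightarrow> 'n tfun" where
  "apply_ops [] f = f"
| "apply_ops (Inl i # ops) f = dx i (apply_ops ops f)"
| "apply_ops (Inr i # ops) f = dy i (apply_ops ops f)"

text \<open>C^infinity on the open set T_0U = U x (real^'n - {0}): every iterated partial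
 derivative is (Frechet) differentiable there.\<close>
definition smooth_T0 :: "(real^'n::finite) set \<Rightarrow> 'n tfun \<Rightarrow> bool" where
  "smooth_T0 U f \<longleftrightarrow> (\<forall>ops x y. x \<in> U \<and> y \<noteq> 0 \<longrightarrow>
      (\<lambda>p. apply_ops ops f (fst p) (snd p)) differentiable (at (x, y)))"

definition finsler :: "(real^'n::finite) set \<Rightarrow> 'n tfun \<Rightarrow> bool" where
  "finsler U F \<longleftrightarrow> open U \<and>
     continuous_on (U \<times> UNIV) (\<lambda>p. F (fst p) (snd p)) \<and>
     (\<forall>x\<in>U. \<forall>y. F x y \<ge> 0) \<and>
     (\<forall>x\<in>U. \<forall>y. \<forall>c>0. F x (c *\<^sub>R y) = c * F x y) \<and>
     smooth_T0 U F \<and>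
     (\<forall>x\<in>U. \<forall>y. y \<noteq> 0 \<longrightarrow>
        det (\<chi> i j. (1/2) * dy i (dy j (\<lambda>x y. (F x y)\<^sup>2)) x y) \<noteq> 0)"

definition gmat :: "'n tfun \<Rightarrow> real^'n::finite \<Rightarrow> real^'n \<Rightarrow> real^'n^'n" where
  "gmat F x y = (\<chi> i j. (1/2) * dy i (dy j (\<lambda>x y. (F x y)\<^sup>2)) x y)"

definition ginv :: "'n tfun \<Rightarrow> real^'n::finite \<Rightarrow> real^'n \<Rightarrow> real^'n^'n" where
  "ginv F x y = matrix_inv (gmat F x y)"

definition sprayG :: "'n tfun \<Rightarrow> 'n::finite \<Rightarrow> 'n tfun" where
  "sprayG F i x y = (1/4) * (\<Sum>j\<in>UNIV. ginv F x y $ i $ j *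
      ((\<Sum>k\<in>UNIV. dx k (dy j (\<lambda>x y. (F x y)\<^sup>2)) x y * y $ k)
       - dx j (\<lambda>x y. (F x y)\<^sup>2) x y))"

definition spray :: "'n::finite tfun \<Rightarrow> 'n tfun \<Rightarrow> 'n tfun" where
  "spray F f x y = (\<Sum>i\<in>UNIV. y $ i * dx i f x y)
                   - 2 * (\<Sum>i\<in>UNIV. sprayG F i x y * dy i f x y)"

definition berwald :: "'n tfun \<Rightarrow> 'n::finite \<Rightarrow> 'n \<Rightarrow> 'n \<Rightarrow> 'n \<Rightarrow> 'n tfun" where
  "berwald F i j k l = dy j (dy k (dy l (sprayG F i)))"

definition meanE :: "'n tfun \<Rightarrow> 'n::finite \<Rightarrow> 'n \<Rightarrow> 'n tfun" where
  "meanE F i j x y = (1/2) * (\<Sum>k\<in>UNIV. berwald F k i j k x y)"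

definition distortion :: "(real^'n \<Rightarrow> real) \<Rightarrow> 'n::finite tfun \<Rightarrow> 'n tfun" where
  "distortion \<sigma> F x y = (1/2) * ln (\<bar>det (gmat F x y)\<bar> / \<sigma> x)"

definition Sfun :: "(real^'n \<Rightarrow> real) \<Rightarrow> 'n::finite tfun \<Rightarrow> 'n tfun" where
  "Sfun \<sigma> F = spray F (distortion \<sigma> F)"

definition chi :: "(real^'n \<Rightarrow> real) \<Rightarrow> 'n::finite tfun \<Rightarrow> 'n \<Rightarrow> 'n tfun" where
  "chi \<sigma> F i x y = (1/2) * (spray F (dy i (Sfun \<sigma> F)) x y - dx i (Sfun \<sigma> F) x y)"

definition Emat :: "'n tfun \<Rightarrow> real^'n::finite \<Rightarrow> real^'n \<Rightarrow> real^'n^'n" where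
  "Emat F x y = (\<chi> i j. 2 * F x y * (\<Sum>k\<in>UNIV. ginv F x y $ i $ k * meanE F k j x y))"

fun matpow :: "real^'n::finite^'n \<Rightarrow> nat \<Rightarrow> real^'n^'n" where
  "matpow A 0 = mat 1"
| "matpow A (Suc m) = A ** matpow A m"

end

theory Submission
  imports Defs "HOL-Computational_Algebra.Polynomial"
begin


definition unc :: "'n tfun \<Rightarrow> ((real^'n::finite) \<times> (real^'n)) \<Rightarrow> real" where
  "unc f p = f (fst p) (snd p)"

definition pd :: "((real^'n) \<times> (real^'n)) \<Rightarrow> 'n::finite tfun \<Rightarrow> 'n tfun" where
  "pd u f x y = deriv (\<lambda>t. unc f ((x,y) + t *\<^sub>R u)) 0"

lemma dx_pd: "dx i f = pd (axis i 1, 0) f"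
  by (rule ext)+ (simp add: dx_def pd_def unc_def)

lemma dy_pd: "dy i f = pd (0, axis i 1) f"
  by (rule ext)+ (simp add: dy_def pd_def unc_def)

definition dif :: "'n::finite tfun \<Rightarrow> real^'n \<Rightarrow> real^'n \<Rightarrow> bool" where
  "dif f x y \<longleftrightarrow> unc f differentiable at (x,y)"

lemma line_deriv:
  assumes "(unc f has_derivative f') (at (q + t0 *\<^sub>R u))"
  shows "((\<lambda>t. unc f (q + t *\<^sub>R u)) has_real_derivative f' u) (at t0)"
proof -
  have "((\<lambda>t. q + t *\<^sub>R u) has_derivative (\<lambda>s. s *\<^sub>R u)) (at t0)"
    by (auto intro!: derivative_eq_intros)
  from has_derivative_compose[OF this assms]
  have 1: "((\<lambda>t. unc f (q + t *\<^sub>R u)) has_derivative (\<lambda>s. f' (s *\<^sub>R u))) (at t0)" .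
  have "linear f'" using has_derivative_linear[OF assms] .
  then have "(\<lambda>s. f' (s *\<^sub>R u)) = (*) (f' u)"
    by (auto simp: linear_cmul)
  with 1 show ?thesis by (simp add: has_field_derivative_def)
qed

lemma pd_hd:
  assumes "(unc f has_derivative f') (at (x,y))"
  shows "pd u f x y = f' u"
  unfolding pd_def
  by (rule DERIV_imp_deriv) (rule line_deriv, simp add: assms)

abbreviation fd where "fd f x y \<equiv> frechet_derivative (unc f) (at (x,y))"

lemma dif_hd: "dif f x y \<Longrightarrow> (unc f has_derivative fd f x y) (at (x,y))"
  by (simp add: dif_def frechet_derivative_works)

lemma pd_fd: "dif f x y \<Longrightarrow> pd u f x y = fd f x y u"
  by (rule pd_hd) (rule dif_hd)

lemma unc_simps[simp]:
  "unc (\<lambda>x y. f x y + g x y) = (\<lambda>p. unc f p + unc g p)"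
  "unc (\<lambda>x y. f x y - g x y) = (\<lambda>p. unc f p - unc g p)"
  "unc (\<lambda>x y. f x y * g x y) = (\<lambda>p. unc f p * unc g p)"
  "unc (\<lambda>x y. - f x y) = (\<lambda>p. - unc f p)"
  "unc (\<lambda>x y. c) = (\<lambda>p. c)"
  by (auto simp: unc_def)

lemma pd_add: "dif f x y \<Longrightarrow> dif g x y \<Longrightarrow>
   pd u (\<lambda>x y. f x y + g x y) x y = pd u f x y + pd u g x y"
  apply (subst pd_hd[where f'="\<lambda>h. fd f x y h + fd g x y h"])
   apply (simp add: has_derivative_add dif_hd)
  by (simp add: pd_fd)

lemma pd_diff: "dif f x y \<Longrightarrow> dif g x y \<Longrightarrow>
   pd u (\<lambda>x y. f x y - g x y) x y = pd u f x y - pd u g x y"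
  apply (subst pd_hd[where f'="\<lambda>h. fd f x y h - fd g x y h"])
   apply (simp add: has_derivative_diff dif_hd)
  by (simp add: pd_fd)

lemma pd_mult: "dif f x y \<Longrightarrow> dif g x y \<Longrightarrow>
   pd u (\<lambda>x y. f x y * g x y) x y = f x y * pd u g x y + pd u f x y * g x y"
  apply (subst pd_hd[where f'="\<lambda>h. unc f (x,y) * fd g x y h + fd f x y h * unc g (x,y)"])
   apply (simp add: has_derivative_mult dif_hd)
  by (simp add: pd_fd unc_def)

lemma pd_const: "pd u (\<lambda>x y. c) x y = 0"
  unfolding pd_def unc_def by simp

lemma pd_cong_pt:
  assumes "\<forall>\<^sub>F t in nhds 0. unc f ((x,y) + t *\<^sub>R u) = unc g ((x,y) + t *\<^sub>R u)"
  shows "pd u f x y = pd u g x y"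
proof -
  have "\<And>D. DERIV (\<lambda>t. unc f ((x,y) + t *\<^sub>R u)) 0 :> D \<longleftrightarrow> DERIV (\<lambda>t. unc g ((x,y) + t *\<^sub>R u)) 0 :> D"
    by (rule DERIV_cong_ev) (auto simp: assms)
  then show ?thesis unfolding pd_def deriv_def by simp
qed

definition TT :: "(real^'n::finite) set \<Rightarrow> ((real^'n) \<times> (real^'n)) set" where
  "TT U = U \<times> (UNIV - {0})"

lemma open_TT: "open U \<Longrightarrow> open (TT U)"
  unfolding TT_def by (intro open_Times) auto

definition eqOn :: "(real^'n::finite) set \<Rightarrow> 'n tfun \<Rightarrow> 'n tfun \<Rightarrow> bool" where
  "eqOn U f g \<longleftrightarrow> (\<forall>x y. x \<in> U \<longrightarrow> y \<noteq> 0 \<longrightarrow> f x y = g x y)"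

lemma eqOn_unc: "eqOn U f g \<Longrightarrow> p \<in> TT U \<Longrightarrow> unc f p = unc g p"
  by (cases p) (auto simp: eqOn_def TT_def unc_def)

lemma ev_in_open:
  fixes p :: "'a::real_normed_vector"
  assumes "open S" "p \<in> S"
  shows "\<forall>\<^sub>F t in nhds (0::real). p + t *\<^sub>R u \<in> S"
proof -
  obtain e where e: "e > 0" "ball p e \<subseteq> S" using assms open_contains_ball by blast
  have "\<forall>t. dist t 0 < e / (norm u + 1) \<longrightarrow> p + t *\<^sub>R u \<in> S"
  proof (intro allI impI)
    fix t :: real assume "dist t 0 < e / (norm u + 1)"
    then have "\<bar>t\<bar> < e / (norm u + 1)" by simp
    then have t: "\<bar>t\<bar> * (norm u + 1) < e"
    proof -
      have "norm u + 1 > 0" by (simp add: add_nonneg_pos)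
      then show ?thesis using \<open>\<bar>t\<bar> < e / (norm u + 1)\<close> by (simp add: pos_less_divide_eq)
    qed
    have "\<bar>t\<bar> * norm u \<le> \<bar>t\<bar> * (norm u + 1)" by (simp add: mult_left_mono)
    then have "dist p (p + t *\<^sub>R u) < e" using t by (simp add: dist_norm)
    then show "p + t *\<^sub>R u \<in> S" using e by auto
  qed
  moreover have "e / (norm u + 1) > 0" using e by (simp add: add_nonneg_pos)
  ultimately show ?thesis unfolding eventually_nhds_metric by blast
qed

lemma pd_local:
  assumes "open U" "eqOn U f g" "x \<in> U" "y \<noteq> 0"
  shows "pd u f x y = pd u g x y"
proof (rule pd_cong_pt)
  have "\<forall>\<^sub>F t in nhds (0::real). (x,y) + t *\<^sub>R u \<in> TT U"
    by (rule ev_in_open) (use assms open_TT in \<open>auto simp: TT_def\<close>)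
  then show "\<forall>\<^sub>F t in nhds 0. unc f ((x,y) + t *\<^sub>R u) = unc g ((x,y) + t *\<^sub>R u)"
    by eventually_elim (use assms eqOn_unc in blast)
qed

lemma eqOn_pd:
  assumes "open U" "eqOn U f g"
  shows "eqOn U (pd u f) (pd u g)"
  using pd_local[OF assms] by (simp add: eqOn_def)

lemma dif_local:
  assumes "open U" "eqOn U f g" "x \<in> U" "y \<noteq> 0" "dif f x y"
  shows "dif g x y"
proof -
  have "(unc g has_derivative fd f x y) (at (x,y))"
    by (rule has_derivative_transform_within_open[OF dif_hd[OF assms(5)] open_TT[OF assms(1)]])
       (use assms in \<open>auto simp: TT_def intro: eqOn_unc\<close>)
  then show ?thesis unfolding dif_def by (auto simp: differentiable_def)
qed

lemma eqOn_refl[simp]: "eqOn U f f" by (simp add: eqOn_def)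
lemma eqOn_sym: "eqOn U f g \<Longrightarrow> eqOn U g f" by (simp add: eqOn_def)
lemma eqOn_trans: "eqOn U f g \<Longrightarrow> eqOn U g h \<Longrightarrow> eqOn U f h" by (simp add: eqOn_def)


lemma unc_sum[simp]: "unc (\<lambda>x y. \<Sum>a\<in>A. f a x y) = (\<lambda>p. \<Sum>a\<in>A. unc (f a) p)"
  by (auto simp: unc_def)
lemma unc_prod[simp]: "unc (\<lambda>x y. \<Prod>a\<in>A. f a x y) = (\<lambda>p. \<Prod>a\<in>A. unc (f a) p)"
  by (auto simp: unc_def)
lemma unc_inv[simp]: "unc (\<lambda>x y. inverse (f x y)) = (\<lambda>p. inverse (unc f p))"
  by (auto simp: unc_def)
lemma unc_ln[simp]: "unc (\<lambda>x y. ln (f x y)) = (\<lambda>p. ln (unc f p))"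
  by (auto simp: unc_def)

lemma dif_add: "dif f x y \<Longrightarrow> dif g x y \<Longrightarrow> dif (\<lambda>x y. f x y + g x y) x y"
  by (auto simp: dif_def)
lemma dif_diff: "dif f x y \<Longrightarrow> dif g x y \<Longrightarrow> dif (\<lambda>x y. f x y - g x y) x y"
  by (auto simp: dif_def)
lemma dif_mult: "dif f x y \<Longrightarrow> dif g x y \<Longrightarrow> dif (\<lambda>x y. f x y * g x y) x y"
  by (auto simp: dif_def)
lemma dif_const: "dif (\<lambda>x y. c) x y"
  by (auto simp: dif_def)
lemma dif_sum: "finite A \<Longrightarrow> (\<And>a. a \<in> A \<Longrightarrow> dif (f a) x y) \<Longrightarrow> dif (\<lambda>x y. \<Sum>a\<in>A. f a x y) x y"
  unfolding dif_def unc_sum by (rule differentiable_sum) auto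
lemma dif_prod: assumes "\<And>a. a \<in> A \<Longrightarrow> dif (f a) x y" shows "dif (\<lambda>x y. \<Prod>a\<in>A. f a x y) x y"
proof -
  have "((\<lambda>p. \<Prod>a\<in>A. unc (f a) p) has_derivative (\<lambda>h. \<Sum>a\<in>A. fd (f a) x y h * (\<Prod>b\<in>A-{a}. unc (f b) (x,y)))) (at (x,y))"
    by (rule has_derivative_prod) (simp add: assms dif_hd)
  then show ?thesis unfolding dif_def differentiable_def by auto
qed
lemma dif_inv: assumes "dif f x y" "f x y \<noteq> 0" shows "dif (\<lambda>x y. inverse (f x y)) x y"
proof -
  have "((\<lambda>p. inverse (unc f p)) has_derivative (\<lambda>h. - (inverse (unc f (x,y)) * fd f x y h * inverse (unc f (x,y))))) (at (x,y))"
    apply (rule Deriv.has_derivative_inverse) apply (simp add: unc_def assms(2)) by (rule dif_hd[OF assms(1)])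
  then show ?thesis unfolding dif_def differentiable_def by auto
qed
lemma dif_ln: assumes "dif f x y" "f x y > 0" shows "dif (\<lambda>x y. ln (f x y)) x y"
proof -
  have "((\<lambda>p. ln (unc f p)) has_derivative (\<lambda>h. fd f x y h * inverse (unc f (x,y)))) (at (x,y))"
    apply (rule has_derivative_ln) apply (simp add: unc_def assms(2)) by (rule dif_hd[OF assms(1)])
  then show ?thesis unfolding dif_def differentiable_def by auto
qed
lemma dif_yc: "dif (\<lambda>x y. y $ k) x y"
proof -
  have "unc (\<lambda>x y. y $ k) = (\<lambda>p. snd p $ k)" by (auto simp: unc_def)
  moreover have "bounded_linear (\<lambda>p::(real^'a) \<times> (real^'a). snd p $ k)"
    by (intro bounded_linear_compose[OF bounded_linear_vec_nth] bounded_linear_snd)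
  ultimately show ?thesis unfolding dif_def
    using bounded_linear_imp_differentiable by metis
qed

lemma pd_sum: "finite A \<Longrightarrow> (\<And>a. a \<in> A \<Longrightarrow> dif (f a) x y) \<Longrightarrow>
   pd u (\<lambda>x y. \<Sum>a\<in>A. f a x y) x y = (\<Sum>a\<in>A. pd u (f a) x y)"
  apply (subst pd_hd[where f'="\<lambda>h. \<Sum>a\<in>A. fd (f a) x y h"])
   apply (simp, rule has_derivative_sum, simp add: dif_hd)
  by (simp add: pd_fd)

lemma pd_prod: "finite A \<Longrightarrow> (\<And>a. a \<in> A \<Longrightarrow> dif (f a) x y) \<Longrightarrow>
   pd u (\<lambda>x y. \<Prod>a\<in>A. f a x y) x y = (\<Sum>a\<in>A. pd u (f a) x y * (\<Prod>b\<in>A-{a}. f b x y))"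
  apply (subst pd_hd[where f'="\<lambda>h. \<Sum>a\<in>A. fd (f a) x y h * (\<Prod>b\<in>A-{a}. unc (f b) (x,y))"])
   apply (simp, rule has_derivative_prod, simp add: dif_hd)
  by (simp add: pd_fd unc_def)

lemma pd_inv: "dif f x y \<Longrightarrow> f x y \<noteq> 0 \<Longrightarrow>
   pd u (\<lambda>x y. inverse (f x y)) x y = - pd u f x y * inverse (f x y) * inverse (f x y)"
  apply (subst pd_hd[where f'="\<lambda>h. - (inverse (unc f (x,y)) * fd f x y h * inverse (unc f (x,y)))"])
   apply (simp, rule Deriv.has_derivative_inverse, simp add: unc_def, simp add: dif_hd)
  by (simp add: pd_fd unc_def)

lemma pd_ln: "dif f x y \<Longrightarrow> f x y > 0 \<Longrightarrow>
   pd u (\<lambda>x y. ln (f x y)) x y = pd u f x y * inverse (f x y)"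
  apply (subst pd_hd[where f'="\<lambda>h. fd f x y h * inverse (unc f (x,y))"])
   apply (simp, rule has_derivative_ln, simp add: unc_def, simp add: dif_hd)
  by (simp add: pd_fd unc_def)

lemma pd_yc: "pd u (\<lambda>x y. y $ k) x y = snd u $ k"
proof -
  have "((\<lambda>t. y $ k + t * snd u $ k) has_real_derivative snd u $ k) (at 0)"
    by (auto intro!: derivative_eq_intros)
  then show ?thesis unfolding pd_def unc_def by (simp add: DERIV_imp_deriv)
qed

lemma pd_xonly: "pd (0, v) (\<lambda>x y. \<phi> x y0) x y = 0"
  unfolding pd_def unc_def by simp

lemma pd_cmult: "dif f x y \<Longrightarrow> pd u (\<lambda>x y. c * f x y) x y = c * pd u f x y"
  using pd_mult[of "\<lambda>x y. c" x y f u] by (simp add: dif_const pd_const)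

lemma pd_minus: "dif f x y \<Longrightarrow> pd u (\<lambda>x y. - f x y) x y = - pd u f x y"
  using pd_cmult[of f x y u "-1"] by simp

lemma unc_eta: "unc f = (\<lambda>p. f (fst p) (snd p))" by (rule ext) (simp add: unc_def)


lemma apply_ops_append: "apply_ops (ops @ ops') f = apply_ops ops (apply_ops ops' f)"
proof (induction ops)
  case Nil then show ?case by simp
next
  case (Cons op ops) then show ?case by (cases op) auto
qed

definition ax :: "((real^'n::finite) \<times> (real^'n)) \<Rightarrow> bool" where
  "ax u \<longleftrightarrow> (\<exists>i. u = (axis i 1, 0)) \<or> (\<exists>i. u = (0, axis i 1))"

lemma smooth_dif: assumes "smooth_T0 U f" "x \<in> U" "y \<noteq> 0" shows "dif f x y"
proof -
  have "(\<lambda>p. apply_ops [] f (fst p) (snd p)) differentiable at (x,y)"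
    using assms unfolding smooth_T0_def by blast
  then show ?thesis by (simp add: dif_def unc_eta)
qed

lemma smooth_dx: fixes f :: "'n::finite tfun" assumes "smooth_T0 U f" shows "smooth_T0 U (dx i f)"
  unfolding smooth_T0_def
proof (intro allI impI)
  fix ops and x y :: "real^'n" assume "x \<in> U \<and> y \<noteq> 0"
  moreover have "apply_ops ops (dx i f) = apply_ops (ops @ [Inl i]) f" by (simp add: apply_ops_append)
  ultimately show "(\<lambda>p. apply_ops ops (dx i f) (fst p) (snd p)) differentiable at (x, y)"
    using assms unfolding smooth_T0_def by metis
qed

lemma smooth_dy: fixes f :: "'n::finite tfun" assumes "smooth_T0 U f" shows "smooth_T0 U (dy i f)"
  unfolding smooth_T0_def
proof (intro allI impI)
  fix ops and x y :: "real^'n" assume "x \<in> U \<and> y \<noteq> 0"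
  moreover have "apply_ops ops (dy i f) = apply_ops (ops @ [Inr i]) f" by (simp add: apply_ops_append)
  ultimately show "(\<lambda>p. apply_ops ops (dy i f) (fst p) (snd p)) differentiable at (x, y)"
    using assms unfolding smooth_T0_def by metis
qed

lemma smooth_pd: "smooth_T0 U f \<Longrightarrow> ax u \<Longrightarrow> smooth_T0 U (pd u f)"
  unfolding ax_def by (auto simp: smooth_dx smooth_dy dx_pd[symmetric] dy_pd[symmetric])

lemma apply_ops_eqOn: "open U \<Longrightarrow> eqOn U f g \<Longrightarrow> eqOn U (apply_ops ops f) (apply_ops ops g)"
proof (induction ops)
  case Nil then show ?case by simp
next
  case (Cons op ops) then show ?case
    by (cases op) (auto simp: dx_pd dy_pd intro: eqOn_pd)
qed

lemma smooth_eqOn: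
  fixes f :: "'n::finite tfun"
  assumes "open U" "smooth_T0 U f" "eqOn U f g"
  shows "smooth_T0 U g"
  unfolding smooth_T0_def
proof (intro allI impI)
  fix ops and x y :: "real^'n" assume xy: "x \<in> U \<and> y \<noteq> 0"
  have "dif (apply_ops ops f) x y"
    using assms(2) xy unfolding smooth_T0_def dif_def unc_eta by auto
  then have "dif (apply_ops ops g) x y"
    using dif_local[OF assms(1) apply_ops_eqOn[OF assms(1,3)]] xy by blast
  then show "(\<lambda>p. apply_ops ops g (fst p) (snd p)) differentiable at (x, y)"
    by (simp add: dif_def unc_eta)
qed

inductive gen :: "(real^'n::finite) set \<Rightarrow> 'n tfun \<Rightarrow> bool" for U where
  gsm: "smooth_T0 U f \<Longrightarrow> gen U f"
| gcst: "gen U (\<lambda>x y. c)"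
| gyc: "gen U (\<lambda>x y. y $ k)"
| gadd: "gen U f \<Longrightarrow> gen U g \<Longrightarrow> gen U (\<lambda>x y. f x y + g x y)"
| gmul: "gen U f \<Longrightarrow> gen U g \<Longrightarrow> gen U (\<lambda>x y. f x y * g x y)"
| ginv: "gen U f \<Longrightarrow> (\<forall>x y. x \<in> U \<longrightarrow> y \<noteq> 0 \<longrightarrow> f x y \<noteq> 0) \<Longrightarrow> gen U (\<lambda>x y. inverse (f x y))"
| gln: "gen U f \<Longrightarrow> (\<forall>x y. x \<in> U \<longrightarrow> y \<noteq> 0 \<longrightarrow> f x y > 0) \<Longrightarrow> gen U (\<lambda>x y. ln (f x y))"

lemma gen_step:
  assumes "open U" "gen U f"
  shows "(\<forall>x y. x \<in> U \<longrightarrow> y \<noteq> 0 \<longrightarrow> dif f x y) \<and> (\<forall>u. ax u \<longrightarrow> (\<exists>h. gen U h \<and> eqOn U (pd u f) h))"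
  using assms(2)
proof induction
  case (gsm f)
  then show ?case using smooth_dif smooth_pd gen.gsm by (metis eqOn_refl)
next
  case (gcst c)
  then show ?case by (auto simp: dif_const pd_const eqOn_def intro!: exI[of _ "\<lambda>x y. 0"] gen.gcst)
next
  case (gyc k)
  show ?case
  proof (intro conjI allI impI)
    fix x y show "dif (\<lambda>x y. y $ k) x y" by (rule dif_yc)
  next
    fix u :: "(real^'a) \<times> (real^'a)" assume "ax u"
    show "\<exists>h. gen U h \<and> eqOn U (pd u (\<lambda>x y. y $ k)) h"
      by (rule exI[of _ "\<lambda>x y. snd u $ k"]) (auto simp: pd_yc eqOn_def gen.gcst)
  qed
next
  case (gadd f g)
  show ?case
  proof (intro conjI allI impI)
    fix x y :: "real^'a" assume "x \<in> U" "y \<noteq> 0" then show "dif (\<lambda>x y. f x y + g x y) x y"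
      using gadd by (simp add: dif_add)
  next
    fix u :: "(real^'a) \<times> (real^'a)" assume "ax u"
    then obtain h1 h2 where "gen U h1" "eqOn U (pd u f) h1" "gen U h2" "eqOn U (pd u g) h2"
      using gadd by blast
    then show "\<exists>h. gen U h \<and> eqOn U (pd u (\<lambda>x y. f x y + g x y)) h"
      using gadd by (auto simp: eqOn_def pd_add intro!: exI[of _ "\<lambda>x y. h1 x y + h2 x y"] gen.gadd)
  qed
next
  case (gmul f g)
  show ?case
  proof (intro conjI allI impI)
    fix x y :: "real^'a" assume "x \<in> U" "y \<noteq> 0" then show "dif (\<lambda>x y. f x y * g x y) x y"
      using gmul by (simp add: dif_mult)
  next
    fix u :: "(real^'a) \<times> (real^'a)" assume "ax u"
    then obtain h1 h2 where "gen U h1" "eqOn U (pd u f) h1" "gen U h2" "eqOn U (pd u g) h2"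
      using gmul by blast
    then show "\<exists>h. gen U h \<and> eqOn U (pd u (\<lambda>x y. f x y * g x y)) h"
      using gmul by (auto simp: eqOn_def pd_mult
          intro!: exI[of _ "\<lambda>x y. f x y * h2 x y + h1 x y * g x y"] gen.gadd gen.gmul)
  qed
next
  case (ginv f)
  show ?case
  proof (intro conjI allI impI)
    fix x y :: "real^'a" assume "x \<in> U" "y \<noteq> 0" then show "dif (\<lambda>x y. inverse (f x y)) x y"
      using ginv by (simp add: dif_inv)
  next
    fix u :: "(real^'a) \<times> (real^'a)" assume "ax u"
    then obtain h1 where "gen U h1" "eqOn U (pd u f) h1"
      using ginv by blast
    then show "\<exists>h. gen U h \<and> eqOn U (pd u (\<lambda>x y. inverse (f x y))) h"
      using ginv by (auto simp: eqOn_def pd_inv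
          intro!: exI[of _ "\<lambda>x y. ((-1) * h1 x y) * inverse (f x y) * inverse (f x y)"] gen.gmul gen.gcst gen.ginv)
  qed
next
  case (gln f)
  show ?case
  proof (intro conjI allI impI)
    fix x y :: "real^'a" assume "x \<in> U" "y \<noteq> 0" then show "dif (\<lambda>x y. ln (f x y)) x y"
      using gln by (simp add: dif_ln)
  next
    fix u :: "(real^'a) \<times> (real^'a)" assume "ax u"
    then obtain h1 where "gen U h1" "eqOn U (pd u f) h1"
      using gln by blast
    then show "\<exists>h. gen U h \<and> eqOn U (pd u (\<lambda>x y. ln (f x y))) h"
      using gln less_irrefl by (fastforce simp: eqOn_def pd_ln
          intro!: exI[of _ "\<lambda>x y. h1 x y * inverse (f x y)"] gen.gmul gen.ginv)
  qed
qed

lemma gen_smooth: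
  fixes f :: "'n::finite tfun"
  assumes "open U" "gen U f"
  shows "smooth_T0 U f"
proof -
  have "\<exists>h. gen U h \<and> eqOn U (apply_ops ops f) h" for ops
  proof (induction ops)
    case Nil then show ?case using assms by auto
  next
    case (Cons op ops)
    then obtain h where h: "gen U h" "eqOn U (apply_ops ops f) h" by blast
    obtain u where u: "ax u" "apply_ops (op # ops) f = pd u (apply_ops ops f)"
      by (cases op) (auto simp: ax_def dx_pd dy_pd)
    obtain h' where "gen U h'" "eqOn U (pd u h) h'" using gen_step[OF assms(1) h(1)] u by blast
    moreover have "eqOn U (pd u (apply_ops ops f)) (pd u h)" by (rule eqOn_pd[OF assms(1) h(2)])
    ultimately show ?case using u eqOn_trans by metis
  qed
  then show ?thesis unfolding smooth_T0_def
  proof (intro allI impI)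
    fix ops and x y :: "real^'n" assume "\<And>ops. \<exists>h. gen U h \<and> eqOn U (apply_ops ops f) h" "x \<in> U \<and> y \<noteq> 0"
    then obtain h where "gen U h" "eqOn U (apply_ops ops f) h" by blast
    then have "dif (apply_ops ops f) x y"
      using gen_step[OF assms(1)] dif_local[OF assms(1) eqOn_sym] \<open>x \<in> U \<and> y \<noteq> 0\<close> by blast
    then show "(\<lambda>p. apply_ops ops f (fst p) (snd p)) differentiable at (x, y)"
      unfolding dif_def unc_eta .
  qed
qed


lemma line_deriv_shift:
  fixes \<phi> :: "'a::real_normed_vector \<Rightarrow> real"
  assumes "((\<lambda>t. \<phi> ((p0 + s0 *\<^sub>R u) + t *\<^sub>R u)) has_real_derivative D) (at 0)"
  shows "((\<lambda>s. \<phi> (p0 + s *\<^sub>R u)) has_real_derivative D) (at s0)"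
proof -
  have e: "(\<lambda>t. \<phi> ((p0 + s0 *\<^sub>R u) + t *\<^sub>R u)) = (\<lambda>t. (\<lambda>s. \<phi> (p0 + s *\<^sub>R u)) (t + s0))"
    by (rule ext) (simp add: algebra_simps)
  show ?thesis using assms unfolding e using DERIV_shift[of "\<lambda>s. \<phi> (p0 + s *\<^sub>R u)" D 0 s0]
    by simp
qed

lemma schwarz_gen:
  fixes \<phi> P R Q T :: "'a::real_normed_vector \<Rightarrow> real"
  assumes S: "open S" "q \<in> S"
    and dP: "\<And>p. p \<in> S \<Longrightarrow> ((\<lambda>t. \<phi> (p + t *\<^sub>R u)) has_real_derivative P p) (at 0)"
    and dR: "\<And>p. p \<in> S \<Longrightarrow> ((\<lambda>t. \<phi> (p + t *\<^sub>R v)) has_real_derivative R p) (at 0)"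
    and dQ: "\<And>p. p \<in> S \<Longrightarrow> ((\<lambda>t. P (p + t *\<^sub>R v)) has_real_derivative Q p) (at 0)"
    and dT: "\<And>p. p \<in> S \<Longrightarrow> ((\<lambda>t. R (p + t *\<^sub>R u)) has_real_derivative T p) (at 0)"
    and cQ: "continuous (at q) Q" and cT: "continuous (at q) T"
  shows "Q q = T q"
proof (rule ccontr)
  assume ne: "Q q \<noteq> T q"
  define \<epsilon> where "\<epsilon> = \<bar>Q q - T q\<bar> / 2"
  have \<epsilon>: "\<epsilon> > 0" using ne by (simp add: \<epsilon>_def)
  obtain \<delta> where \<delta>: "\<delta> > 0" "ball q \<delta> \<subseteq> S" using S open_contains_ball by blast
  obtain d1 where d1: "d1 > 0" "\<And>p. dist p q < d1 \<Longrightarrow> dist (Q p) (Q q) < \<epsilon>"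
    using cQ \<epsilon> unfolding continuous_at_eps_delta by blast
  obtain d2 where d2: "d2 > 0" "\<And>p. dist p q < d2 \<Longrightarrow> dist (T p) (T q) < \<epsilon>"
    using cT \<epsilon> unfolding continuous_at_eps_delta by blast
  define m where "m = min \<delta> (min d1 d2)"
  have m: "m > 0" "m \<le> \<delta>" "m \<le> d1" "m \<le> d2" using \<delta> d1 d2 by (auto simp: m_def)
  define h where "h = m / (norm u + norm v + 1)"
  have nuv: "norm u + norm v + 1 > 0" by (simp add: add_nonneg_pos)
  have h: "h > 0" using m nuv by (simp add: h_def)
  have hm: "h * (norm u + norm v + 1) = m" using nuv by (simp add: h_def)
  have close: "dist (q + s *\<^sub>R u + t *\<^sub>R v) q < m" if "0 \<le> s" "s \<le> h" "0 \<le> t" "t \<le> h" for s t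
  proof -
    have "dist (q + s *\<^sub>R u + t *\<^sub>R v) q = norm (s *\<^sub>R u + t *\<^sub>R v)" by (simp add: dist_norm)
    also have "\<dots> \<le> s * norm u + t * norm v"
      using norm_triangle_ineq[of "s *\<^sub>R u" "t *\<^sub>R v"] that by simp
    also have "\<dots> \<le> h * norm u + h * norm v"
      using that by (intro add_mono mult_right_mono) auto
    also have "\<dots> < h * (norm u + norm v + 1)" using h by (simp add: algebra_simps)
    finally show ?thesis using hm by simp
  qed
  have inS: "q + s *\<^sub>R u + t *\<^sub>R v \<in> S" if "0 \<le> s" "s \<le> h" "0 \<le> t" "t \<le> h" for s t
    using close[OF that] m \<delta> by (auto simp: dist_commute)
  have Du: "((\<lambda>s. \<phi> (q + s *\<^sub>R u + t *\<^sub>R v)) has_real_derivative P (q + s *\<^sub>R u + t *\<^sub>R v)) (at s)"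
    if "0 \<le> s" "s \<le> h" "0 \<le> t" "t \<le> h" for s t
  proof -
    have eq: "(\<lambda>s. \<phi> (q + s *\<^sub>R u + t *\<^sub>R v)) = (\<lambda>s. \<phi> ((q + t *\<^sub>R v) + s *\<^sub>R u))"
      by (rule ext) (simp add: algebra_simps)
    have pt: "(q + t *\<^sub>R v) + s *\<^sub>R u = q + s *\<^sub>R u + t *\<^sub>R v" by (simp add: algebra_simps)
    show ?thesis unfolding eq
      by (rule line_deriv_shift) (use dP[OF inS[OF that]] in \<open>simp add: pt\<close>)
  qed
  have Dv: "((\<lambda>t. \<phi> (q + s *\<^sub>R u + t *\<^sub>R v)) has_real_derivative R (q + s *\<^sub>R u + t *\<^sub>R v)) (at t)"
    if "0 \<le> s" "s \<le> h" "0 \<le> t" "t \<le> h" for s t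
    by (rule line_deriv_shift) (use dR[OF inS[OF that]] in simp)
  have DPv: "((\<lambda>t. P (q + s *\<^sub>R u + t *\<^sub>R v)) has_real_derivative Q (q + s *\<^sub>R u + t *\<^sub>R v)) (at t)"
    if "0 \<le> s" "s \<le> h" "0 \<le> t" "t \<le> h" for s t
    by (rule line_deriv_shift) (use dQ[OF inS[OF that]] in simp)
  have DRu: "((\<lambda>s. R (q + s *\<^sub>R u + t *\<^sub>R v)) has_real_derivative T (q + s *\<^sub>R u + t *\<^sub>R v)) (at s)"
    if "0 \<le> s" "s \<le> h" "0 \<le> t" "t \<le> h" for s t
  proof -
    have eq: "(\<lambda>s. R (q + s *\<^sub>R u + t *\<^sub>R v)) = (\<lambda>s. R ((q + t *\<^sub>R v) + s *\<^sub>R u))"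
      by (rule ext) (simp add: algebra_simps)
    have pt: "(q + t *\<^sub>R v) + s *\<^sub>R u = q + s *\<^sub>R u + t *\<^sub>R v" by (simp add: algebra_simps)
    show ?thesis unfolding eq
      by (rule line_deriv_shift) (use dT[OF inS[OF that]] in \<open>simp add: pt\<close>)
  qed
  define a where "a s t = \<phi> (q + s *\<^sub>R u + t *\<^sub>R v)" for s t
  define \<Delta> where "\<Delta> = a h h - a h 0 - a 0 h + a 0 0"
  obtain \<xi> where \<xi>: "0 < \<xi>" "\<xi> < h"
    "(a h h - a h 0) - (a 0 h - a 0 0) = (h - 0) * (P (q + \<xi> *\<^sub>R u + h *\<^sub>R v) - P (q + \<xi> *\<^sub>R u + 0 *\<^sub>R v))"
  proof -
    have "\<exists>z>0. z < h \<and> (\<lambda>s. a s h - a s 0) h - (\<lambda>s. a s h - a s 0) 0 =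
        (h - 0) * (\<lambda>s. P (q + s *\<^sub>R u + h *\<^sub>R v) - P (q + s *\<^sub>R u + 0 *\<^sub>R v)) z"
      apply (rule MVT2[OF h])
      unfolding a_def
      apply (rule DERIV_diff)
      using Du[of _ h] Du[of _ 0, simplified] h by auto
    then show ?thesis using that by auto
  qed
  obtain \<eta> where \<eta>: "0 < \<eta>" "\<eta> < h"
    "P (q + \<xi> *\<^sub>R u + h *\<^sub>R v) - P (q + \<xi> *\<^sub>R u + 0 *\<^sub>R v) = (h - 0) * Q (q + \<xi> *\<^sub>R u + \<eta> *\<^sub>R v)"
    using MVT2[OF h, of "\<lambda>t. P (q + \<xi> *\<^sub>R u + t *\<^sub>R v)" "\<lambda>t. Q (q + \<xi> *\<^sub>R u + t *\<^sub>R v)"] DPv \<xi> by auto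
  obtain \<eta>' where \<eta>': "0 < \<eta>'" "\<eta>' < h"
    "(a h h - a 0 h) - (a h 0 - a 0 0) = (h - 0) * (R (q + h *\<^sub>R u + \<eta>' *\<^sub>R v) - R (q + 0 *\<^sub>R u + \<eta>' *\<^sub>R v))"
  proof -
    have "\<exists>z>0. z < h \<and> (\<lambda>t. a h t - a 0 t) h - (\<lambda>t. a h t - a 0 t) 0 =
        (h - 0) * (\<lambda>t. R (q + h *\<^sub>R u + t *\<^sub>R v) - R (q + 0 *\<^sub>R u + t *\<^sub>R v)) z"
      apply (rule MVT2[OF h])
      unfolding a_def
      apply (rule DERIV_diff)
      using Dv[of h] Dv[of 0, simplified] h by auto
    then show ?thesis using that by auto
  qed
  obtain \<xi>' where \<xi>': "0 < \<xi>'" "\<xi>' < h"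
    "R (q + h *\<^sub>R u + \<eta>' *\<^sub>R v) - R (q + 0 *\<^sub>R u + \<eta>' *\<^sub>R v) = (h - 0) * T (q + \<xi>' *\<^sub>R u + \<eta>' *\<^sub>R v)"
    using MVT2[OF h, of "\<lambda>s. R (q + s *\<^sub>R u + \<eta>' *\<^sub>R v)" "\<lambda>s. T (q + s *\<^sub>R u + \<eta>' *\<^sub>R v)"] DRu \<eta>' by auto
  have "h * h * Q (q + \<xi> *\<^sub>R u + \<eta> *\<^sub>R v) = h * h * T (q + \<xi>' *\<^sub>R u + \<eta>' *\<^sub>R v)"
    using \<xi>(3) \<eta>(3) \<eta>'(3) \<xi>'(3) by (simp add: algebra_simps)
  then have QT: "Q (q + \<xi> *\<^sub>R u + \<eta> *\<^sub>R v) = T (q + \<xi>' *\<^sub>R u + \<eta>' *\<^sub>R v)" using h by simp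
  have "dist (Q (q + \<xi> *\<^sub>R u + \<eta> *\<^sub>R v)) (Q q) < \<epsilon>"
    by (rule d1(2)) (use close[of \<xi> \<eta>] \<xi> \<eta> m in auto)
  moreover have "dist (T (q + \<xi>' *\<^sub>R u + \<eta>' *\<^sub>R v)) (T q) < \<epsilon>"
    by (rule d2(2)) (use close[of \<xi>' \<eta>'] \<xi>' \<eta>' m in auto)
  ultimately have "\<bar>Q q - T q\<bar> < 2 * \<epsilon>" using QT by (simp add: dist_real_def)
  then show False by (simp add: \<epsilon>_def)
qed


lemma dP_gen:
  assumes "smooth_T0 U g" "p \<in> TT U"
  shows "((\<lambda>t. unc g (p + t *\<^sub>R u)) has_real_derivative unc (pd u g) p) (at 0)"
proof (cases p)
  case (Pair a b)
  then have ab: "a \<in> U" "b \<noteq> 0" using assms(2) by (auto simp: TT_def)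
  have d: "dif g a b" by (rule smooth_dif[OF assms(1) ab])
  have "((\<lambda>t. unc g (p + t *\<^sub>R u)) has_real_derivative fd g a b u) (at 0)"
    by (rule line_deriv) (simp add: Pair dif_hd[OF d])
  moreover have "unc (pd u g) p = fd g a b u" using pd_fd[OF d] Pair by (simp add: unc_def)
  ultimately show ?thesis by simp
qed

lemma pd_comm:
  assumes U: "open U" and f: "smooth_T0 U f" and u: "ax u" and v: "ax v" and xy: "x \<in> U" "y \<noteq> 0"
  shows "pd v (pd u f) x y = pd u (pd v f) x y"
proof -
  have q: "(x,y) \<in> TT U" using xy by (simp add: TT_def)
  have s1: "smooth_T0 U (pd u f)" "smooth_T0 U (pd v f)" using smooth_pd[OF f u] smooth_pd[OF f v] by auto
  have s2: "smooth_T0 U (pd v (pd u f))" "smooth_T0 U (pd u (pd v f))"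
    using smooth_pd[OF s1(1) v] smooth_pd[OF s1(2) u] by auto
  have c: "continuous (at (x,y)) (unc g)" if "smooth_T0 U g" for g
    using smooth_dif[OF that xy] unfolding dif_def by (rule differentiable_imp_continuous_within)
  have "unc (pd v (pd u f)) (x,y) = unc (pd u (pd v f)) (x,y)"
    by (rule schwarz_gen[OF open_TT[OF U] q, of "unc f" u "unc (pd u f)" v "unc (pd v f)"])
       (auto intro!: dP_gen f s1 c s2)
  then show ?thesis by (simp add: unc_def)
qed

lemma dxdy: "open U \<Longrightarrow> smooth_T0 U f \<Longrightarrow> x \<in> U \<Longrightarrow> y \<noteq> 0 \<Longrightarrow> dx i (dy j f) x y = dy j (dx i f) x y"
  unfolding dx_pd dy_pd by (rule pd_comm) (auto simp: ax_def)
lemma dydy: "open U \<Longrightarrow> smooth_T0 U f \<Longrightarrow> x \<in> U \<Longrightarrow> y \<noteq> 0 \<Longrightarrow> dy i (dy j f) x y = dy j (dy i f) x y"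
  unfolding dy_pd by (rule pd_comm) (auto simp: ax_def)
lemma dxdx: "open U \<Longrightarrow> smooth_T0 U f \<Longrightarrow> x \<in> U \<Longrightarrow> y \<noteq> 0 \<Longrightarrow> dx i (dx j f) x y = dx j (dx i f) x y"
  unfolding dx_pd by (rule pd_comm) (auto simp: ax_def)

context fixes U :: "(real^'n::finite) set" assumes openU: "open U"
begin

lemma S_gen: "smooth_T0 U f \<Longrightarrow> gen U f" by (rule gen.gsm)

lemma S_add: "smooth_T0 U f \<Longrightarrow> smooth_T0 U g \<Longrightarrow> smooth_T0 U (\<lambda>x y. f x y + g x y)"
  by (rule gen_smooth[OF openU]) (intro gen.gadd S_gen)
lemma S_mult: "smooth_T0 U f \<Longrightarrow> smooth_T0 U g \<Longrightarrow> smooth_T0 U (\<lambda>x y. f x y * g x y)"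
  by (rule gen_smooth[OF openU]) (intro gen.gmul S_gen)
lemma S_const: "smooth_T0 U (\<lambda>x y. c)"
  by (rule gen_smooth[OF openU]) (rule gen.gcst)
lemma S_yc: "smooth_T0 U (\<lambda>x y. y $ k)"
  by (rule gen_smooth[OF openU]) (rule gen.gyc)
lemma S_inv: "smooth_T0 U f \<Longrightarrow> (\<forall>x y. x \<in> U \<longrightarrow> y \<noteq> 0 \<longrightarrow> f x y \<noteq> 0) \<Longrightarrow> smooth_T0 U (\<lambda>x y. inverse (f x y))"
  by (rule gen_smooth[OF openU]) (intro gen.ginv S_gen)
lemma S_ln: "smooth_T0 U f \<Longrightarrow> (\<forall>x y. x \<in> U \<longrightarrow> y \<noteq> 0 \<longrightarrow> f x y > 0) \<Longrightarrow> smooth_T0 U (\<lambda>x y. ln (f x y))"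
  by (rule gen_smooth[OF openU]) (intro gen.gln S_gen)
lemma S_cmult: "smooth_T0 U f \<Longrightarrow> smooth_T0 U (\<lambda>x y. c * f x y)"
  using S_mult[OF S_const] by blast
lemma S_minus: "smooth_T0 U f \<Longrightarrow> smooth_T0 U (\<lambda>x y. - f x y)"
  using S_cmult[of f "-1"] by simp
lemma S_diff: "smooth_T0 U f \<Longrightarrow> smooth_T0 U g \<Longrightarrow> smooth_T0 U (\<lambda>x y. f x y - g x y)"
  using S_add[OF _ S_minus, of f g] by simp
lemma S_sum: "finite A \<Longrightarrow> (\<And>a. a \<in> A \<Longrightarrow> smooth_T0 U (f a)) \<Longrightarrow> smooth_T0 U (\<lambda>x y. \<Sum>a\<in>A. f a x y)"
proof (induction A rule: finite_induct)
  case empty then show ?case by (simp add: S_const)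
next
  case (insert a A) then show ?case by (simp add: S_add)
qed
lemma S_prod: "finite A \<Longrightarrow> (\<And>a. a \<in> A \<Longrightarrow> smooth_T0 U (f a)) \<Longrightarrow> smooth_T0 U (\<lambda>x y. \<Prod>a\<in>A. f a x y)"
proof (induction A rule: finite_induct)
  case empty then show ?case by (simp add: S_const)
next
  case (insert a A) then show ?case by (simp add: S_mult)
qed
lemma S_divide: "smooth_T0 U f \<Longrightarrow> smooth_T0 U g \<Longrightarrow> (\<forall>x y. x \<in> U \<longrightarrow> y \<noteq> 0 \<longrightarrow> g x y \<noteq> 0) \<Longrightarrow> smooth_T0 U (\<lambda>x y. f x y / g x y)"
  using S_mult[OF _ S_inv, of f g] by (simp add: divide_inverse)
lemma S_eq: "smooth_T0 U f \<Longrightarrow> eqOn U f g \<Longrightarrow> smooth_T0 U g"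
  by (rule smooth_eqOn[OF openU])

end


definition rowrep :: "'a::comm_ring_1^'n^'n \<Rightarrow> 'n::finite \<Rightarrow> 'a^'n \<Rightarrow> 'a^'n^'n" where
  "rowrep A k v = (\<chi> i. if i = k then v else A $ i)"

definition colrep :: "'a::comm_ring_1^'n^'n \<Rightarrow> 'n::finite \<Rightarrow> 'a^'n \<Rightarrow> 'a^'n^'n" where
  "colrep A j w = (\<chi> i c. if c = j then w $ i else A $ i $ c)"

definition cof :: "'a::comm_ring_1^'n^'n \<Rightarrow> 'n::finite \<Rightarrow> 'n \<Rightarrow> 'a" where
  "cof A k j = det (rowrep A k (axis j 1))"

lemma det_rowrep_expand:
  "det (rowrep A k v) = (\<Sum>p | p permutes UNIV. of_int (sign p) * (v $ (p k) * (\<Prod>i\<in>UNIV-{k}. A $ i $ p i)))"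
proof -
  have "(\<Prod>i\<in>UNIV. rowrep A k v $ i $ p i) = v $ (p k) * (\<Prod>i\<in>UNIV-{k}. A $ i $ p i)" for p
  proof -
    have "(\<Prod>i\<in>UNIV. rowrep A k v $ i $ p i) = rowrep A k v $ k $ p k * (\<Prod>i\<in>UNIV-{k}. rowrep A k v $ i $ p i)"
      by (rule prod.remove) auto
    also have "(\<Prod>i\<in>UNIV-{k}. rowrep A k v $ i $ p i) = (\<Prod>i\<in>UNIV-{k}. A $ i $ p i)"
      by (rule prod.cong) (auto simp: rowrep_def)
    finally show ?thesis by (simp add: rowrep_def)
  qed
  then show ?thesis unfolding det_def by simp
qed

lemma cof_lin_row: "(\<Sum>j\<in>UNIV. w $ j * cof A k j) = det (rowrep A k w)"
proof -
  have "(\<Sum>j\<in>UNIV. w $ j * cof A k j) =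
     (\<Sum>j\<in>UNIV. \<Sum>p | p permutes UNIV. w $ j * (of_int (sign p) * ((axis j 1) $ (p k) * (\<Prod>i\<in>UNIV-{k}. A $ i $ p i))))"
    unfolding cof_def det_rowrep_expand by (simp add: sum_distrib_left)
  also have "\<dots> = (\<Sum>p | p permutes UNIV. \<Sum>j\<in>UNIV. w $ j * (of_int (sign p) * ((axis j 1) $ (p k) * (\<Prod>i\<in>UNIV-{k}. A $ i $ p i))))"
    by (rule sum.swap)
  also have "\<dots> = (\<Sum>p | p permutes UNIV. of_int (sign p) * (w $ (p k) * (\<Prod>i\<in>UNIV-{k}. A $ i $ p i)))"
  proof (rule sum.cong[OF refl])
    fix p
    have "(\<Sum>j\<in>UNIV. w $ j * (of_int (sign p) * ((axis j 1) $ (p k) * (\<Prod>i\<in>UNIV-{k}. A $ i $ p i))))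
        = (\<Sum>j\<in>UNIV. if j = p k then w $ j * (of_int (sign p) * (\<Prod>i\<in>UNIV-{k}. A $ i $ p i)) else 0)"
      by (rule sum.cong) (auto simp: axis_def)
    also have "\<dots> = w $ (p k) * (of_int (sign p) * (\<Prod>i\<in>UNIV-{k}. A $ i $ p i))"
      by (simp add: sum.delta')
    finally show "(\<Sum>j\<in>UNIV. w $ j * (of_int (sign p) * ((axis j 1) $ (p k) * (\<Prod>i\<in>UNIV-{k}. A $ i $ p i))))
        = of_int (sign p) * (w $ (p k) * (\<Prod>i\<in>UNIV-{k}. A $ i $ p i))" by (simp add: algebra_simps)
  qed
  finally show ?thesis by (simp add: det_rowrep_expand)
qed

lemma colrep_transpose: "colrep A j w = transpose (rowrep (transpose A) j w)"
  by (simp add: colrep_def rowrep_def transpose_def vec_eq_iff)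

lemma cof_eq_col: "cof A k j = det (colrep A j (axis k 1))"
proof -
  have "(\<Prod>i\<in>UNIV. rowrep A k (axis j 1) $ i $ p i) = (\<Prod>i\<in>UNIV. colrep A j (axis k 1) $ i $ p i)"
    if p: "p permutes UNIV" for p
  proof (cases "p k = j")
    case True
    have "(\<Prod>i\<in>UNIV. rowrep A k (axis j 1) $ i $ p i) = (\<Prod>i\<in>UNIV. if i = k then 1 else A $ i $ p i)"
      by (rule prod.cong) (auto simp: rowrep_def axis_def True)
    moreover have "(\<Prod>i\<in>UNIV. colrep A j (axis k 1) $ i $ p i) = (\<Prod>i\<in>UNIV. if i = k then 1 else A $ i $ p i)"
    proof (rule prod.cong[OF refl])
      fix i
      have "p i = j \<longleftrightarrow> i = k" using True permutes_inj[OF p] by (metis inj_eq)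
      then show "colrep A j (axis k 1) $ i $ p i = (if i = k then 1 else A $ i $ p i)"
        by (auto simp: colrep_def axis_def)
    qed
    ultimately show ?thesis by simp
  next
    case False
    have "(\<Prod>i\<in>UNIV. rowrep A k (axis j 1) $ i $ p i) = 0"
      by (rule prod_zero) (use False in \<open>auto simp: rowrep_def axis_def intro!: bexI[of _ k]\<close>)
    moreover obtain i0 where i0: "p i0 = j" using permutes_surj[OF p] by (metis surjD)
    then have "i0 \<noteq> k" using False by auto
    then have "(\<Prod>i\<in>UNIV. colrep A j (axis k 1) $ i $ p i) = 0"
      by (intro prod_zero) (use i0 in \<open>auto simp: colrep_def axis_def intro!: bexI[of _ i0]\<close>)
    ultimately show ?thesis by simp
  qed
  then show ?thesis unfolding cof_def det_def by (intro sum.cong) auto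
qed

lemma cof_lin_col: "(\<Sum>k\<in>UNIV. w $ k * cof A k j) = det (rowrep (transpose A) j w)"
proof -
  have "cof A k j = cof (transpose A) j k" for k
    by (simp only: cof_eq_col[of A k j] colrep_transpose det_transpose) (simp add: cof_def)
  then show ?thesis using cof_lin_row[of w "transpose A" j] by simp
qed

lemma cof_row_id: "(\<Sum>j\<in>UNIV. A $ l $ j * cof A k j) = (if l = k then det A else 0)"
proof -
  have "(\<Sum>j\<in>UNIV. A $ l $ j * cof A k j) = det (rowrep A k (A $ l))"
    using cof_lin_row[of "A $ l" A k] by simp
  moreover have "rowrep A k (A $ k) = A" by (simp add: rowrep_def vec_eq_iff)
  moreover have "l \<noteq> k \<Longrightarrow> det (rowrep A k (A $ l)) = 0"
    by (rule det_identical_rows[of k l]) (auto simp: rowrep_def row_def vec_eq_iff)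
  ultimately show ?thesis by auto
qed

lemma cof_col_id: "(\<Sum>k\<in>UNIV. A $ k $ l * cof A k j) = (if l = j then det A else 0)"
proof -
  have "(\<Sum>k\<in>UNIV. A $ k $ l * cof A k j) = det (rowrep (transpose A) j (transpose A $ l))"
    using cof_lin_col[of "transpose A $ l" A j] by (simp add: transpose_def)
  moreover have "rowrep (transpose A) j (transpose A $ j) = transpose A" by (simp add: rowrep_def vec_eq_iff)
  moreover have "l \<noteq> j \<Longrightarrow> det (rowrep (transpose A) j (transpose A $ l)) = 0"
    by (rule det_identical_rows[of j l]) (auto simp: rowrep_def row_def vec_eq_iff)
  ultimately show ?thesis by auto
qed

lemma jacobi_combo:
  fixes A X Y :: "'a::comm_ring_1^'n::finite^'n"
  shows "(\<Sum>k\<in>UNIV. \<Sum>j\<in>UNIV. (X ** A + A ** Y) $ k $ j * cof A k j) = (trace X + trace Y) * det A"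
proof -
  have 1: "(\<Sum>k\<in>UNIV. \<Sum>j\<in>UNIV. (X ** A) $ k $ j * cof A k j) = trace X * det A"
  proof -
    have "(\<Sum>k\<in>UNIV. \<Sum>j\<in>UNIV. (X ** A) $ k $ j * cof A k j)
        = (\<Sum>k\<in>UNIV. \<Sum>j\<in>UNIV. \<Sum>l\<in>UNIV. X $ k $ l * (A $ l $ j * cof A k j))"
      by (simp add: matrix_matrix_mult_def sum_distrib_right mult.assoc)
    also have "\<dots> = (\<Sum>k\<in>UNIV. \<Sum>l\<in>UNIV. X $ k $ l * (\<Sum>j\<in>UNIV. A $ l $ j * cof A k j))"
      by (rule sum.cong[OF refl], subst sum.swap) (simp add: sum_distrib_left)
    also have "\<dots> = (\<Sum>k\<in>UNIV. X $ k $ k * det A)"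
      by (simp add: cof_row_id if_distrib sum.delta cong: if_cong)
    finally show ?thesis by (simp add: trace_def sum_distrib_right)
  qed
  have 2: "(\<Sum>k\<in>UNIV. \<Sum>j\<in>UNIV. (A ** Y) $ k $ j * cof A k j) = trace Y * det A"
  proof -
    have "(\<Sum>k\<in>UNIV. \<Sum>j\<in>UNIV. (A ** Y) $ k $ j * cof A k j)
        = (\<Sum>k\<in>UNIV. \<Sum>j\<in>UNIV. \<Sum>l\<in>UNIV. Y $ l $ j * (A $ k $ l * cof A k j))"
      by (simp add: matrix_matrix_mult_def sum_distrib_right sum_distrib_left algebra_simps)
    also have "\<dots> = (\<Sum>j\<in>UNIV. \<Sum>l\<in>UNIV. Y $ l $ j * (\<Sum>k\<in>UNIV. A $ k $ l * cof A k j))"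
      by (subst sum.swap, rule sum.cong[OF refl], subst sum.swap) (simp add: sum_distrib_left)
    also have "\<dots> = (\<Sum>j\<in>UNIV. Y $ j $ j * det A)"
      by (simp add: cof_col_id if_distrib sum.delta cong: if_cong)
    finally show ?thesis by (simp add: trace_def sum_distrib_right)
  qed
  show ?thesis using 1 2 by (simp add: matrix_add_ldistrib distrib_right sum.distrib)
qed


lemma mm_add_rdistrib: "((A::'a::comm_ring_1^'n::finite^'m) + B) ** C = A ** C + B ** C"
  by (simp add: matrix_matrix_mult_def vec_eq_iff sum.distrib distrib_right)
lemma mm_diff_rdistrib: "((A::'a::comm_ring_1^'n::finite^'m) - B) ** C = A ** C - B ** C"
  by (simp add: matrix_matrix_mult_def vec_eq_iff sum_subtractf left_diff_distrib)
lemma mm_diff_ldistrib: "(A::'a::comm_ring_1^'n::finite^'m) ** (B - C) = A ** B - A ** C"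
  by (simp add: matrix_matrix_mult_def vec_eq_iff sum_subtractf right_diff_distrib)

lemma trace_comm_zero: "trace ((A::'a::comm_ring_1^'n::finite^'n) ** B - B ** A) = 0"
  unfolding trace_sub by (subst trace_mul_sym) simp

locale derivn =
  fixes D :: "'n::finite tfun \<Rightarrow> real" and C :: "'n tfun \<Rightarrow> bool" and x0 y0 :: "real^'n"
  assumes D_add: "C f \<Longrightarrow> C g \<Longrightarrow> D (\<lambda>x y. f x y + g x y) = D f + D g"
    and D_mult: "C f \<Longrightarrow> C g \<Longrightarrow> D (\<lambda>x y. f x y * g x y) = f x0 y0 * D g + D f * g x0 y0"
    and D_const: "D (\<lambda>x y. c) = 0"
    and C_add: "C f \<Longrightarrow> C g \<Longrightarrow> C (\<lambda>x y. f x y + g x y)"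
    and C_mult: "C f \<Longrightarrow> C g \<Longrightarrow> C (\<lambda>x y. f x y * g x y)"
    and C_const: "C (\<lambda>x y. c)"
begin

lemma D_cmult: "C f \<Longrightarrow> D (\<lambda>x y. c * f x y) = c * D f"
proof -
  assume f: "C f"
  have "D (\<lambda>x y. c * f x y) = c * D f + D (\<lambda>x y. c) * f x0 y0" by (rule D_mult[OF C_const f])
  then show ?thesis by (simp only: D_const mult_zero_left add_0_right)
qed
lemma C_cmult: "C f \<Longrightarrow> C (\<lambda>x y. c * f x y)"
  by (rule C_mult[OF C_const])
lemma D_minus: "C f \<Longrightarrow> D (\<lambda>x y. - f x y) = - D f"
proof -
  assume f: "C f"
  have "D (\<lambda>x y. - f x y) = D (\<lambda>x y. (-1) * f x y)" by simp
  also have "\<dots> = - D f" using D_cmult[OF f, of "-1"] by simp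
  finally show ?thesis .
qed
lemma C_minus: "C f \<Longrightarrow> C (\<lambda>x y. - f x y)"
  using C_cmult[of f "-1"] by simp
lemma D_diff: "C f \<Longrightarrow> C g \<Longrightarrow> D (\<lambda>x y. f x y - g x y) = D f - D g"
proof -
  assume f: "C f" and g: "C g"
  have "D (\<lambda>x y. f x y - g x y) = D (\<lambda>x y. f x y + - g x y)" by simp
  also have "\<dots> = D f + D (\<lambda>x y. - g x y)" by (rule D_add[OF f C_minus[OF g]])
  finally show ?thesis using D_minus[OF g] by simp
qed
lemma C_diff: "C f \<Longrightarrow> C g \<Longrightarrow> C (\<lambda>x y. f x y - g x y)"
  using C_add[OF _ C_minus, of f g] by simp

lemma C_sum: "finite A \<Longrightarrow> (\<And>a. a \<in> A \<Longrightarrow> C (f a)) \<Longrightarrow> C (\<lambda>x y. \<Sum>a\<in>A. f a x y)"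
proof (induction A rule: finite_induct)
  case empty then show ?case by (simp add: C_const)
next
  case (insert a A) then show ?case by (simp add: C_add)
qed

lemma D_sum: "finite A \<Longrightarrow> (\<And>a. a \<in> A \<Longrightarrow> C (f a)) \<Longrightarrow> D (\<lambda>x y. \<Sum>a\<in>A. f a x y) = (\<Sum>a\<in>A. D (f a))"
proof (induction A rule: finite_induct)
  case empty then show ?case by (simp add: D_const)
next
  case (insert a A)
  have "D (\<lambda>x y. \<Sum>b\<in>insert a A. f b x y) = D (\<lambda>x y. f a x y + (\<Sum>b\<in>A. f b x y))"
    using insert(1,2) by simp
  also have "\<dots> = D (f a) + D (\<lambda>x y. \<Sum>b\<in>A. f b x y)"
    using insert by (intro D_add C_sum) auto
  finally show ?case using insert by simp
qed

lemma C_prod: "finite A \<Longrightarrow> (\<And>a. a \<in> A \<Longrightarrow> C (f a)) \<Longrightarrow> C (\<lambda>x y. \<Prod>a\<in>A. f a x y)"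
proof (induction A rule: finite_induct)
  case empty then show ?case by (simp add: C_const)
next
  case (insert a A) then show ?case by (simp add: C_mult)
qed

lemma D_prod: "finite A \<Longrightarrow> (\<And>a. a \<in> A \<Longrightarrow> C (f a)) \<Longrightarrow>
   D (\<lambda>x y. \<Prod>a\<in>A. f a x y) = (\<Sum>a\<in>A. D (f a) * (\<Prod>b\<in>A-{a}. f b x0 y0))"
proof (induction A rule: finite_induct)
  case empty then show ?case by (simp add: D_const)
next
  case (insert a A)
  have "D (\<lambda>x y. \<Prod>b\<in>insert a A. f b x y) = D (\<lambda>x y. f a x y * (\<Prod>b\<in>A. f b x y))"
    using insert(1,2) by simp
  also have "\<dots> = f a x0 y0 * D (\<lambda>x y. \<Prod>b\<in>A. f b x y) + D (f a) * (\<Prod>b\<in>A. f b x0 y0)"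
    using insert by (intro D_mult C_prod) auto
  also have "\<dots> = (\<Sum>c\<in>A. D (f c) * (f a x0 y0 * (\<Prod>b\<in>A-{c}. f b x0 y0))) + D (f a) * (\<Prod>b\<in>A. f b x0 y0)"
    using insert by (simp add: sum_distrib_left algebra_simps)
  also have "\<dots> = (\<Sum>c\<in>insert a A. D (f c) * (\<Prod>b\<in>insert a A-{c}. f b x0 y0))"
  proof -
    have "(\<Prod>b\<in>insert a A-{c}. f b x0 y0) = f a x0 y0 * (\<Prod>b\<in>A-{c}. f b x0 y0)" if "c \<in> A" for c
    proof -
      have "insert a A - {c} = insert a (A - {c})" using that insert(2) by auto
      then show ?thesis using insert(1,2) by simp
    qed
    moreover have "insert a A - {a} = A" using insert(2) by auto
    ultimately show ?thesis using insert(1,2) by (simp add: add.commute)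
  qed
  finally show ?case .
qed

definition CM :: "(real^'n \<Rightarrow> real^'n \<Rightarrow> real^'n^'n) \<Rightarrow> bool" where
  "CM A \<longleftrightarrow> (\<forall>i j. C (\<lambda>x y. A x y $ i $ j))"
definition DM :: "(real^'n \<Rightarrow> real^'n \<Rightarrow> real^'n^'n) \<Rightarrow> real^'n^'n" where
  "DM A = (\<chi> i j. D (\<lambda>x y. A x y $ i $ j))"

lemma CM_mult: "CM A \<Longrightarrow> CM B \<Longrightarrow> CM (\<lambda>x y. A x y ** B x y)"
  unfolding CM_def matrix_matrix_mult_def by (auto intro!: C_sum C_mult)

lemma DM_mult: "CM A \<Longrightarrow> CM B \<Longrightarrow> DM (\<lambda>x y. A x y ** B x y) = DM A ** B x0 y0 + A x0 y0 ** DM B"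
  unfolding CM_def DM_def matrix_matrix_mult_def
  by (simp add: vec_eq_iff D_sum C_mult D_mult sum.distrib algebra_simps)

lemma C_det: "CM M \<Longrightarrow> C (\<lambda>x y. det (M x y))"
  unfolding det_def CM_def
  by (intro C_sum C_cmult C_prod) (auto simp: finite_permutations)

lemma D_det: "CM M \<Longrightarrow> D (\<lambda>x y. det (M x y)) = (\<Sum>k\<in>UNIV. \<Sum>j\<in>UNIV. DM M $ k $ j * cof (M x0 y0) k j)"
proof -
  assume M: "CM M"
  let ?P = "{p. p permutes (UNIV::'n set)}"
  have fP: "finite ?P" by (simp add: finite_permutations)
  have "D (\<lambda>x y. det (M x y)) = D (\<lambda>x y. \<Sum>p\<in>?P. of_int (sign p) * (\<Prod>i\<in>UNIV. M x y $ i $ p i))"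
    unfolding det_def by simp
  also have "\<dots> = (\<Sum>p\<in>?P. of_int (sign p) * D (\<lambda>x y. \<Prod>i\<in>UNIV. M x y $ i $ p i))"
    using M unfolding CM_def by (simp add: D_sum fP C_cmult C_prod D_cmult)
  also have "\<dots> = (\<Sum>p\<in>?P. of_int (sign p) * (\<Sum>k\<in>UNIV. DM M $ k $ p k * (\<Prod>i\<in>UNIV-{k}. M x0 y0 $ i $ p i)))"
    using M unfolding CM_def DM_def by (simp add: D_prod)
  also have "\<dots> = (\<Sum>k\<in>UNIV. \<Sum>p\<in>?P. of_int (sign p) * (DM M $ k $ p k * (\<Prod>i\<in>UNIV-{k}. M x0 y0 $ i $ p i)))"
    unfolding sum_distrib_left by (rule sum.swap)
  also have "\<dots> = (\<Sum>k\<in>UNIV. det (rowrep (M x0 y0) k (DM M $ k)))"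
    by (simp add: det_rowrep_expand)
  also have "\<dots> = (\<Sum>k\<in>UNIV. \<Sum>j\<in>UNIV. DM M $ k $ j * cof (M x0 y0) k j)"
    by (simp add: cof_lin_row)
  finally show ?thesis .
qed

lemma D_trace: "CM A \<Longrightarrow> D (\<lambda>x y. trace (A x y)) = trace (DM A)"
  unfolding trace_def CM_def DM_def by (simp add: D_sum)

lemma C_trace: "CM A \<Longrightarrow> C (\<lambda>x y. trace (A x y))"
  unfolding trace_def CM_def by (simp add: C_sum)

lemma CM_matpow: "CM M \<Longrightarrow> CM (\<lambda>x y. matpow (M x y) a)"
proof (induction a)
  case 0 then show ?case by (simp add: CM_def mat_def C_const)
next
  case (Suc a) then show ?case by (simp add: CM_mult)
qed

lemma DM_matpow:
  assumes M: "CM M" and DMM: "DM M = M x0 y0 ** B - B ** M x0 y0"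
  shows "DM (\<lambda>x y. matpow (M x y) a) = matpow (M x0 y0) a ** B - B ** matpow (M x0 y0) a"
proof (induction a)
  case 0
  have "DM (\<lambda>x y. matpow (M x y) 0) = 0" by (simp add: DM_def mat_def D_const vec_eq_iff)
  then show ?case by simp
next
  case (Suc a)
  let ?M = "M x0 y0" and ?P = "matpow (M x0 y0) a"
  have "DM (\<lambda>x y. matpow (M x y) (Suc a)) = DM M ** ?P + ?M ** DM (\<lambda>x y. matpow (M x y) a)"
    by (simp add: DM_mult M CM_matpow)
  also have "\<dots> = (?M ** B - B ** ?M) ** ?P + ?M ** (?P ** B - B ** ?P)"
    by (simp add: DMM Suc)
  also have "\<dots> = ?M ** ?P ** B - B ** (?M ** ?P)"
    by (simp add: mm_diff_rdistrib mm_diff_ldistrib matrix_mul_assoc)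
  finally show ?case by simp
qed

end


lemma smul_eq_scaleR: "((*s) :: real \<Rightarrow> real^'n \<Rightarrow> _) = (*\<^sub>R)" by (simp add: fun_eq_iff vec_eq_iff)

lemma y_expand: "(y::real^'n::finite) = (\<Sum>l\<in>UNIV. y $ l *\<^sub>R axis l 1)"
  using basis_expansion[of y] by (simp add: smul_eq_scaleR)

definition hom :: "(real^'n::finite) set \<Rightarrow> real \<Rightarrow> 'n tfun \<Rightarrow> bool" where
  "hom U r f \<longleftrightarrow> (\<forall>x\<in>U. \<forall>y. y \<noteq> 0 \<longrightarrow> (\<forall>c>0. f x (c *\<^sub>R y) = c powr r * f x y))"

lemma pd_deriv_at0: "dif f x y \<Longrightarrow> ((\<lambda>t. unc f ((x,y) + t *\<^sub>R u)) has_real_derivative pd u f x y) (at 0)"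
  using line_deriv[of f "fd f x y" "(x,y)" 0 u] dif_hd[of f x y] pd_fd[of f x y u] by simp

context fixes U :: "(real^'n::finite) set" assumes openU: "open U"
begin

lemma derivn_pd: assumes "x \<in> U" "y \<noteq> 0" shows "derivn (\<lambda>f. pd u f x y) (smooth_T0 U) x y"
  by unfold_locales
     (auto simp: pd_add pd_mult pd_const smooth_dif[OF _ assms] S_add[OF openU] S_mult[OF openU] S_const[OF openU])

lemma derivn_dx: assumes "x \<in> U" "y \<noteq> 0" shows "derivn (\<lambda>f. dx i f x y) (smooth_T0 U) x y"
  using derivn_pd[OF assms, of "(axis i 1, 0)"] by (simp add: dx_pd)

lemma derivn_dy: assumes "x \<in> U" "y \<noteq> 0" shows "derivn (\<lambda>f. dy i f x y) (smooth_T0 U) x y"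
  using derivn_pd[OF assms, of "(0, axis i 1)"] by (simp add: dy_pd)

lemma derivn_spray: assumes xy: "x \<in> U" "y \<noteq> 0" shows "derivn (\<lambda>f. spray F f x y) (smooth_T0 U) x y"
proof unfold_locales
  fix f g assume f: "smooth_T0 U f" and g: "smooth_T0 U g"
  have a1: "dx i (\<lambda>x y. f x y + g x y) x y = dx i f x y + dx i g x y" for i
    using derivn.D_add[OF derivn_dx[OF xy] f g] .
  have a2: "dy i (\<lambda>x y. f x y + g x y) x y = dy i f x y + dy i g x y" for i
    using derivn.D_add[OF derivn_dy[OF xy] f g] .
  show "spray F (\<lambda>x y. f x y + g x y) x y = spray F f x y + spray F g x y"
    unfolding spray_def a1 a2 by (simp add: sum.distrib distrib_left)
  have m1: "dx i (\<lambda>x y. f x y * g x y) x y = f x y * dx i g x y + dx i f x y * g x y" for i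
    using derivn.D_mult[OF derivn_dx[OF xy] f g] .
  have m2: "dy i (\<lambda>x y. f x y * g x y) x y = f x y * dy i g x y + dy i f x y * g x y" for i
    using derivn.D_mult[OF derivn_dy[OF xy] f g] .
  show "spray F (\<lambda>x y. f x y * g x y) x y = f x y * spray F g x y + spray F f x y * g x y"
    unfolding spray_def m1 m2
    by (simp add: sum.distrib distrib_left sum_distrib_left sum_distrib_right right_diff_distrib left_diff_distrib
        mult.assoc mult.left_commute)
next
  fix f g assume f: "smooth_T0 U f" and g: "smooth_T0 U g"
  show "smooth_T0 U (\<lambda>x y. f x y + g x y)" by (rule S_add[OF openU f g])
  show "smooth_T0 U (\<lambda>x y. f x y * g x y)" by (rule S_mult[OF openU f g])
next
  fix c
  show "spray F (\<lambda>x y. c) x y = 0" by (simp add: spray_def dx_pd dy_pd pd_const)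
  show "smooth_T0 U (\<lambda>x y. c)" by (rule S_const[OF openU])
qed

lemma hom_pd_x:
  assumes f: "smooth_T0 U f" and h: "hom U r f" and xy: "x \<in> U" "y \<noteq> 0" and c: "c > 0"
  shows "pd (a, 0) f x (c *\<^sub>R y) = c powr r * pd (a, 0) f x y"
proof -
  have d: "dif f x y" by (rule smooth_dif[OF f xy])
  have D1: "((\<lambda>t. unc f ((x,y) + t *\<^sub>R (a,0))) has_real_derivative pd (a,0) f x y) (at 0)"
    by (rule pd_deriv_at0[OF d])
  have ev: "\<forall>\<^sub>F t in nhds 0. x + t *\<^sub>R a \<in> U" by (rule ev_in_open[OF openU xy(1)])
  have ev2: "\<forall>\<^sub>F t in nhds 0. unc f ((x, c *\<^sub>R y) + t *\<^sub>R (a,0)) = c powr r * unc f ((x,y) + t *\<^sub>R (a,0))"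
    using ev by eventually_elim (use h xy c in \<open>simp add: hom_def unc_def\<close>)
  have "((\<lambda>t. unc f ((x, c *\<^sub>R y) + t *\<^sub>R (a,0))) has_real_derivative c powr r * pd (a,0) f x y) (at 0)"
    using DERIV_cmult[OF D1, of "c powr r"] DERIV_cong_ev[OF refl ev2 refl] by simp
  then show ?thesis unfolding pd_def by (rule DERIV_imp_deriv)
qed

lemma hom_pd_y:
  assumes f: "smooth_T0 U f" and h: "hom U r f" and xy: "x \<in> U" "y \<noteq> 0" and c: "c > 0"
  shows "pd (0, b) f x (c *\<^sub>R y) = c powr (r - 1) * pd (0, b) f x y"
proof -
  have d: "dif f x y" by (rule smooth_dif[OF f xy])
  let ?\<phi> = "\<lambda>t. unc f ((x,y) + t *\<^sub>R (0,b))"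
  have D1: "(?\<phi> has_real_derivative pd (0,b) f x y) (at 0)"
    by (rule pd_deriv_at0[OF d])
  have D2: "((\<lambda>t. c powr r * ?\<phi> (t / c)) has_real_derivative c powr r * (pd (0,b) f x y * (1 / c))) (at 0)"
  proof (rule DERIV_cmult)
    have "((\<lambda>t. t / c) has_real_derivative 1 / c) (at 0)" using c by (auto intro!: derivative_eq_intros)
    then show "((\<lambda>t. ?\<phi> (t / c)) has_real_derivative pd (0,b) f x y * (1 / c)) (at 0)"
      using DERIV_chain2[of ?\<phi> "pd (0,b) f x y" "\<lambda>t. t / c" 0 "1/c"] D1 by simp
  qed
  have ev: "\<forall>\<^sub>F t in nhds 0. y + t *\<^sub>R ((1/c) *\<^sub>R b) \<in> UNIV - {0}"
    by (rule ev_in_open) (use xy in auto)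
  have ev2: "\<forall>\<^sub>F t in nhds 0. unc f ((x, c *\<^sub>R y) + t *\<^sub>R (0,b)) = c powr r * ?\<phi> (t / c)"
    using ev
  proof eventually_elim
    case (elim t)
    have cnz: "c \<noteq> 0" using c by simp
    have "c *\<^sub>R y + t *\<^sub>R b = c *\<^sub>R (y + t *\<^sub>R ((1/c) *\<^sub>R b))" using cnz by (simp add: algebra_simps)
    moreover have "y + t *\<^sub>R ((1/c) *\<^sub>R b) = y + (t / c) *\<^sub>R b" by simp
    ultimately show ?case using h xy c elim by (simp add: hom_def unc_def)
  qed
  have "((\<lambda>t. unc f ((x, c *\<^sub>R y) + t *\<^sub>R (0,b))) has_real_derivative c powr r * (pd (0,b) f x y * (1 / c))) (at 0)"
    using D2 DERIV_cong_ev[OF refl ev2 refl] by simp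
  then have "pd (0, b) f x (c *\<^sub>R y) = c powr r * (pd (0,b) f x y * (1 / c))"
    unfolding pd_def by (rule DERIV_imp_deriv)
  also have "\<dots> = c powr (r - 1) * pd (0, b) f x y"
    using c by (simp add: powr_diff)
  finally show ?thesis .
qed

lemma hom_dx: assumes "smooth_T0 U f" "hom U r f" shows "hom U r (dx i f)"
  unfolding hom_def dx_pd using hom_pd_x[OF assms] by blast

lemma hom_dy: assumes "smooth_T0 U f" "hom U r f" shows "hom U (r - 1) (dy i f)"
  unfolding hom_def dy_pd using hom_pd_y[OF assms] by blast

lemma euler:
  assumes f: "smooth_T0 U f" and h: "hom U r f" and xy: "x \<in> U" "y \<noteq> 0"
  shows "(\<Sum>l\<in>UNIV. y $ l * dy l f x y) = r * f x y"
proof -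
  have d: "dif f x y" by (rule smooth_dif[OF f xy])
  have A: "((\<lambda>t. unc f ((x,0) + t *\<^sub>R (0,y))) has_real_derivative fd f x y (0,y)) (at 1)"
    by (rule line_deriv) (simp add: dif_hd[OF d])
  have ev: "\<forall>\<^sub>F t in nhds (1::real). t \<in> {0<..}" by (rule eventually_nhds_in_open) (simp_all add: open_greaterThan)
  have ev2: "\<forall>\<^sub>F t in nhds 1. unc f ((x,0) + t *\<^sub>R (0,y)) = t powr r * f x y"
    using ev by eventually_elim (use h xy in \<open>simp add: hom_def unc_def\<close>)
  have B: "((\<lambda>t. t powr r * f x y) has_real_derivative r * 1 powr (r - 1) * f x y) (at 1)"
    by (rule DERIV_cmult_right) (rule has_real_derivative_powr, simp)
  have "fd f x y (0,y) = r * f x y"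
    using DERIV_unique[OF A] B DERIV_cong_ev[OF refl ev2 refl] by simp
  moreover have "fd f x y (0,y) = (\<Sum>l\<in>UNIV. y $ l * dy l f x y)"
  proof -
    have lin: "linear (fd f x y)" using has_derivative_linear[OF dif_hd[OF d]] .
    have P: "linear (\<lambda>v::real^'n. ((0::real^'n), v))"
      by (intro bounded_linear.linear bounded_linear_Pair bounded_linear_zero bounded_linear_ident)
    have L: "linear (\<lambda>v. fd f x y (0, v))"
      using linear_compose[OF P lin] by (simp add: o_def)
    have "fd f x y (0,y) = fd f x y (0, \<Sum>l\<in>UNIV. y $ l *\<^sub>R axis l 1)" using y_expand[of y] by simp
    also have "\<dots> = (\<Sum>l\<in>UNIV. y $ l * fd f x y (0, axis l 1))"
      unfolding linear_sum[OF L] by (simp add: linear_cmul[OF L])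
    also have "\<dots> = (\<Sum>l\<in>UNIV. y $ l * dy l f x y)"
      by (simp add: dy_pd pd_fd[OF d])
    finally show ?thesis .
  qed
  ultimately show ?thesis by simp
qed

end


lemma inv_props:
  assumes "invertible (A::real^'n::finite^'n)"
  shows "A ** matrix_inv A = mat 1" "matrix_inv A ** A = mat 1"
proof -
  have "\<exists>A'. A ** A' = mat 1 \<and> A' ** A = mat 1" using assms by (simp add: invertible_def)
  then have "A ** matrix_inv A = mat 1 \<and> matrix_inv A ** A = mat 1"
    unfolding matrix_inv_def by (rule someI_ex)
  then show "A ** matrix_inv A = mat 1" "matrix_inv A ** A = mat 1" by auto
qed

lemma matrix_inv_cof:
  assumes d: "det (A::real^'n::finite^'n) \<noteq> 0"
  shows "matrix_inv A = (\<chi> i j. cof A j i / det A)"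
proof -
  let ?X = "(\<chi> i j. cof A j i / det A) :: real^'n^'n"
  have AX: "A ** ?X = mat 1"
  proof -
    have "(A ** ?X) $ l $ k = mat 1 $ l $ k" for l k
    proof -
      have "(A ** ?X) $ l $ k = (\<Sum>j\<in>UNIV. A $ l $ j * cof A k j) / det A"
        by (simp add: matrix_matrix_mult_def sum_divide_distrib)
      also have "\<dots> = mat 1 $ l $ k" using d by (simp add: cof_row_id mat_def)
      finally show ?thesis .
    qed
    then show ?thesis by (simp add: vec_eq_iff)
  qed
  have inv: "invertible A" using d by (simp add: invertible_det_nz)
  have "matrix_inv A = matrix_inv A ** (A ** ?X)" by (simp add: AX)
  also have "\<dots> = ?X" by (simp add: matrix_mul_assoc inv_props[OF inv])
  finally show ?thesis .
qed

lemma det_nz_kernel: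
  assumes "det (A::real^'n::finite^'n) \<noteq> 0" "A *v y = 0"
  shows "y = 0"
proof -
  have inv: "invertible A" using assms by (simp add: invertible_det_nz)
  have "y = (matrix_inv A ** A) *v y" by (simp add: inv_props[OF inv])
  also have "\<dots> = matrix_inv A *v (A *v y)" by (simp add: matrix_vector_mul_assoc)
  finally show ?thesis using assms by simp
qed

lemma S_det:
  assumes "open U" "\<And>i j. smooth_T0 U (\<lambda>x y. M x y $ i $ j)"
  shows "smooth_T0 U (\<lambda>x y. det (M x y))"
  unfolding det_def
  by (intro S_sum[OF assms(1)] S_cmult[OF assms(1)] S_prod[OF assms(1)] assms(2)) (auto simp: finite_permutations)

locale fins =
  fixes U :: "(real^'n::finite) set" and F :: "'n tfun"
  assumes fin: "finsler U F"
begin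

lemma openU: "open U" using fin by (simp add: finsler_def)
lemma SF: "smooth_T0 U F" using fin by (simp add: finsler_def)

lemmas Sintro = S_add[OF openU] S_mult[OF openU] S_const[OF openU] S_yc[OF openU] S_cmult[OF openU]
  S_minus[OF openU] S_diff[OF openU] S_sum[OF openU] smooth_dx smooth_dy

lemma Sh: "smooth_T0 U (\<lambda>x y. (F x y)\<^sup>2)"
  unfolding power2_eq_square by (intro Sintro SF)

lemma Sg: "smooth_T0 U (\<lambda>x y. gmat F x y $ i $ j)"
proof -
  have e: "(\<lambda>x y. gmat F x y $ i $ j) = (\<lambda>x y. 1/2 * dy i (dy j (\<lambda>x y. (F x y)\<^sup>2)) x y)"
    by (simp add: gmat_def)
  show ?thesis unfolding e by (intro Sintro Sh)
qed

lemma gsym: "x \<in> U \<Longrightarrow> y \<noteq> 0 \<Longrightarrow> gmat F x y $ i $ j = gmat F x y $ j $ i"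
  unfolding gmat_def using dydy[OF openU Sh] by simp

lemma detg: "x \<in> U \<Longrightarrow> y \<noteq> 0 \<Longrightarrow> det (gmat F x y) \<noteq> 0"
  using fin by (simp add: finsler_def gmat_def)

lemma g_gi: "x \<in> U \<Longrightarrow> y \<noteq> 0 \<Longrightarrow> gmat F x y ** ginv F x y = mat 1"
  using inv_props(1)[of "gmat F x y"] detg by (simp add: ginv_def invertible_det_nz)
lemma gi_g: "x \<in> U \<Longrightarrow> y \<noteq> 0 \<Longrightarrow> ginv F x y ** gmat F x y = mat 1"
  using inv_props(2)[of "gmat F x y"] detg by (simp add: ginv_def invertible_det_nz)

lemma Sdetg: "smooth_T0 U (\<lambda>x y. det (gmat F x y))"
  by (rule S_det[OF openU Sg])

lemma Sgi: "smooth_T0 U (\<lambda>x y. ginv F x y $ i $ j)"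
proof (rule S_eq[OF openU])
  show "smooth_T0 U (\<lambda>x y. det (rowrep (gmat F x y) j (axis i 1)) / det (gmat F x y))"
  proof (rule S_divide[OF openU])
    show "smooth_T0 U (\<lambda>x y. det (rowrep (gmat F x y) j (axis i 1)))"
    proof (rule S_det[OF openU])
      fix r c
      show "smooth_T0 U (\<lambda>x y. rowrep (gmat F x y) j (axis i 1) $ r $ c)"
        by (cases "r = j") (simp_all add: rowrep_def Sg S_const[OF openU])
    qed
    show "smooth_T0 U (\<lambda>x y. det (gmat F x y))" by (rule Sdetg)
    show "\<forall>x y. x \<in> U \<longrightarrow> y \<noteq> 0 \<longrightarrow> det (gmat F x y) \<noteq> 0" using detg by blast
  qed
  show "eqOn U (\<lambda>x y. det (rowrep (gmat F x y) j (axis i 1)) / det (gmat F x y)) (\<lambda>x y. ginv F x y $ i $ j)"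
    unfolding eqOn_def ginv_def using matrix_inv_cof[OF detg] by (simp add: cof_def)
qed

definition PP :: "'n \<Rightarrow> 'n tfun" where
  "PP j x y = (\<Sum>k\<in>UNIV. dx k (dy j (\<lambda>x y. (F x y)\<^sup>2)) x y * y $ k) - dx j (\<lambda>x y. (F x y)\<^sup>2) x y"

lemma sprayG_PP: "sprayG F i x y = (1/4) * (\<Sum>j\<in>UNIV. ginv F x y $ i $ j * PP j x y)"
  by (simp add: sprayG_def PP_def)

lemma SPP: "smooth_T0 U (PP j)"
proof -
  have "PP j = (\<lambda>x y. (\<Sum>k\<in>UNIV. dx k (dy j (\<lambda>x y. (F x y)\<^sup>2)) x y * y $ k) - dx j (\<lambda>x y. (F x y)\<^sup>2) x y)"
    by (simp add: PP_def fun_eq_iff)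
  then show ?thesis by (simp only:, intro Sintro Sh, simp)
qed

lemma SG: "smooth_T0 U (sprayG F i)"
proof -
  have e: "sprayG F i = (\<lambda>x y. (1/4) * (\<Sum>j\<in>UNIV. ginv F x y $ i $ j * PP j x y))"
    by (simp add: sprayG_PP fun_eq_iff)
  show ?thesis unfolding e by (intro Sintro Sgi SPP, simp)
qed

lemma Sspray: "smooth_T0 U f \<Longrightarrow> smooth_T0 U (spray F f)"
proof -
  assume f: "smooth_T0 U f"
  have e: "spray F f = (\<lambda>x y. (\<Sum>i\<in>UNIV. y $ i * dx i f x y) - 2 * (\<Sum>i\<in>UNIV. sprayG F i x y * dy i f x y))"
    by (simp add: spray_def fun_eq_iff)
  show ?thesis unfolding e by (intro Sintro SG f, simp_all)
qed

end


context fins begin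

lemma spray_local:
  assumes "x \<in> U" "y \<noteq> 0" "eqOn U f g"
  shows "spray F f x y = spray F g x y"
  unfolding spray_def dx_pd dy_pd using pd_local[OF openU assms(3) assms(1,2)] by simp

lemma homF: "hom U 1 F"
  using fin by (simp add: finsler_def hom_def)

lemma homh: "hom U 2 (\<lambda>x y. (F x y)\<^sup>2)"
  using fin by (simp add: finsler_def hom_def power_mult_distrib)

lemma eul_h: "x \<in> U \<Longrightarrow> y \<noteq> 0 \<Longrightarrow>
   (\<Sum>l\<in>UNIV. y $ l * dy l (\<lambda>x y. (F x y)\<^sup>2) x y) = 2 * (F x y)\<^sup>2"
  using euler[OF openU Sh homh] by simp

lemma eul_hk: "x \<in> U \<Longrightarrow> y \<noteq> 0 \<Longrightarrow>
   (\<Sum>l\<in>UNIV. y $ l * dy l (dy k (\<lambda>x y. (F x y)\<^sup>2)) x y) = dy k (\<lambda>x y. (F x y)\<^sup>2) x y"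
  using euler[OF openU smooth_dy[OF Sh] hom_dy[OF openU Sh homh]] by simp

lemma eul_xh: "x \<in> U \<Longrightarrow> y \<noteq> 0 \<Longrightarrow>
   (\<Sum>l\<in>UNIV. y $ l * dy l (dx m (\<lambda>x y. (F x y)\<^sup>2)) x y) = 2 * dx m (\<lambda>x y. (F x y)\<^sup>2) x y"
  using euler[OF openU smooth_dx[OF Sh] hom_dx[OF openU Sh homh]] by simp

lemma I3:
  assumes xy: "x \<in> U" "y \<noteq> 0"
  shows "(\<Sum>l\<in>UNIV. dy k (dy l (\<lambda>x y. (F x y)\<^sup>2)) x y * sprayG F l x y) = PP k x y / 2"
proof -
  let ?g = "gmat F x y" and ?gi = "ginv F x y"
  have 1: "dy k (dy l (\<lambda>x y. (F x y)\<^sup>2)) x y = 2 * ?g $ k $ l" for l by (simp add: gmat_def)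
  have "(\<Sum>l\<in>UNIV. dy k (dy l (\<lambda>x y. (F x y)\<^sup>2)) x y * sprayG F l x y)
      = (\<Sum>l\<in>UNIV. \<Sum>j\<in>UNIV. 1/2 * (?g $ k $ l * ?gi $ l $ j * PP j x y))"
    by (simp add: 1 sprayG_PP sum_distrib_left mult_ac)
  also have "\<dots> = (\<Sum>j\<in>UNIV. \<Sum>l\<in>UNIV. 1/2 * (?g $ k $ l * ?gi $ l $ j * PP j x y))"
    by (rule sum.swap)
  also have "\<dots> = (\<Sum>j\<in>UNIV. 1/2 * ((?g ** ?gi) $ k $ j * PP j x y))"
    by (simp add: matrix_matrix_mult_def sum_distrib_left sum_distrib_right)
  also have "\<dots> = (\<Sum>j\<in>UNIV. if k = j then PP j x y / 2 else 0)"
    by (rule sum.cong) (auto simp: g_gi[OF xy] mat_def)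
  also have "\<dots> = PP k x y / 2" by simp
  finally show ?thesis .
qed

lemma I4:
  assumes xy: "x \<in> U" "y \<noteq> 0"
  shows "spray F (\<lambda>x y. (F x y)\<^sup>2) x y = 0"
proof -
  let ?h = "\<lambda>x y. (F x y)\<^sup>2"
  have a: "(\<Sum>l\<in>UNIV. sprayG F l x y * dy l ?h x y)
      = (\<Sum>l\<in>UNIV. \<Sum>k\<in>UNIV. y $ k * (dy k (dy l ?h) x y * sprayG F l x y))"
    by (simp add: eul_hk[OF xy, symmetric] sum_distrib_left sum_distrib_right mult_ac)
  also have "\<dots> = (\<Sum>k\<in>UNIV. y $ k * (\<Sum>l\<in>UNIV. dy k (dy l ?h) x y * sprayG F l x y))"
    by (subst sum.swap) (simp add: sum_distrib_left)
  also have "\<dots> = (\<Sum>k\<in>UNIV. y $ k * PP k x y) / 2"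
    by (simp add: I3[OF xy] sum_divide_distrib)
  finally have A: "(\<Sum>l\<in>UNIV. sprayG F l x y * dy l ?h x y) = (\<Sum>k\<in>UNIV. y $ k * PP k x y) / 2" .
  have b: "(\<Sum>k\<in>UNIV. y $ k * dx m (dy k ?h) x y) = 2 * dx m ?h x y" for m
    using eul_xh[OF xy, of m] dxdy[OF openU Sh xy] by simp
  have "(\<Sum>k\<in>UNIV. y $ k * PP k x y)
      = (\<Sum>k\<in>UNIV. \<Sum>m\<in>UNIV. y $ m * (y $ k * dx m (dy k ?h) x y)) - (\<Sum>k\<in>UNIV. y $ k * dx k ?h x y)"
    by (simp add: PP_def right_diff_distrib sum_subtractf sum_distrib_left mult_ac)
  also have "\<dots> = (\<Sum>m\<in>UNIV. y $ m * (\<Sum>k\<in>UNIV. y $ k * dx m (dy k ?h) x y)) - (\<Sum>k\<in>UNIV. y $ k * dx k ?h x y)"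
    by (subst sum.swap) (simp add: sum_distrib_left)
  also have "\<dots> = (\<Sum>m\<in>UNIV. y $ m * dx m ?h x y)"
    by (simp add: b sum_distrib_left mult_ac flip: sum.distrib)
  finally have B: "(\<Sum>k\<in>UNIV. y $ k * PP k x y) = (\<Sum>m\<in>UNIV. y $ m * dx m ?h x y)" .
  show ?thesis unfolding spray_def A B by simp
qed

lemma I5:
  assumes xy: "x \<in> U" "y \<noteq> 0"
  shows "spray F (dy k (\<lambda>x y. (F x y)\<^sup>2)) x y = dx k (\<lambda>x y. (F x y)\<^sup>2) x y"
proof -
  let ?h = "\<lambda>x y. (F x y)\<^sup>2"
  have "(\<Sum>l\<in>UNIV. sprayG F l x y * dy l (dy k ?h) x y) = (\<Sum>l\<in>UNIV. dy k (dy l ?h) x y * sprayG F l x y)"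
    using dydy[OF openU Sh xy] by (simp add: mult.commute)
  then have "(\<Sum>l\<in>UNIV. sprayG F l x y * dy l (dy k ?h) x y) = PP k x y / 2" using I3[OF xy] by simp
  then show ?thesis unfolding spray_def by (simp add: PP_def mult.commute)
qed

end


lemma dy_yc: "dy j (\<lambda>x y. y $ i) x y = (if i = j then 1 else 0)"
  by (simp add: dy_pd pd_yc axis_def)

lemma trace_transpose: "trace (transpose (A::'a::comm_ring_1^'n::finite^'n)) = trace A"
  by (simp add: trace_def transpose_def)

context fins begin

lemma comm:
  assumes xy: "x \<in> U" "y \<noteq> 0" and u: "smooth_T0 U u"
  shows "dy j (spray F u) x y = spray F (dy j u) x y + dx j u x y
           - 2 * (\<Sum>l\<in>UNIV. dy j (sprayG F l) x y * dy l u x y)"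
proof -
  interpret D: derivn "\<lambda>f. dy j f x y" "smooth_T0 U" x y by (rule derivn_dy[OF openU xy])
  have e: "spray F u = (\<lambda>x y. (\<Sum>i\<in>UNIV. y $ i * dx i u x y) - 2 * (\<Sum>i\<in>UNIV. sprayG F i x y * dy i u x y))"
    by (simp add: spray_def fun_eq_iff)
  have SA: "smooth_T0 U (\<lambda>x y. \<Sum>i\<in>UNIV. y $ i * dx i u x y)" by (intro Sintro u) simp
  have SB: "smooth_T0 U (\<lambda>x y. \<Sum>i\<in>UNIV. sprayG F i x y * dy i u x y)" by (intro Sintro u SG) simp
  have A: "dy j (\<lambda>x y. \<Sum>i\<in>UNIV. y $ i * dx i u x y) x y = (\<Sum>i\<in>UNIV. y $ i * dx i (dy j u) x y) + dx j u x y"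
  proof -
    have "dy j (\<lambda>x y. \<Sum>i\<in>UNIV. y $ i * dx i u x y) x y = (\<Sum>i\<in>UNIV. dy j (\<lambda>x y. y $ i * dx i u x y) x y)"
      by (rule D.D_sum) (auto intro!: Sintro u)
    also have "\<dots> = (\<Sum>i\<in>UNIV. y $ i * dx i (dy j u) x y + (if i = j then dx i u x y else 0))"
      by (rule sum.cong[OF refl], subst D.D_mult) (auto intro!: Sintro u simp: dy_yc dxdy[OF openU u xy])
    also have "\<dots> = (\<Sum>i\<in>UNIV. y $ i * dx i (dy j u) x y) + dx j u x y"
      by (simp add: sum.distrib)
    finally show ?thesis .
  qed
  have B: "dy j (\<lambda>x y. \<Sum>i\<in>UNIV. sprayG F i x y * dy i u x y) x y
      = (\<Sum>i\<in>UNIV. sprayG F i x y * dy i (dy j u) x y) + (\<Sum>i\<in>UNIV. dy j (sprayG F i) x y * dy i u x y)"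
  proof -
    have "dy j (\<lambda>x y. \<Sum>i\<in>UNIV. sprayG F i x y * dy i u x y) x y = (\<Sum>i\<in>UNIV. dy j (\<lambda>x y. sprayG F i x y * dy i u x y) x y)"
      by (rule D.D_sum) (auto intro!: Sintro u SG)
    also have "\<dots> = (\<Sum>i\<in>UNIV. sprayG F i x y * dy i (dy j u) x y + dy j (sprayG F i) x y * dy i u x y)"
      by (rule sum.cong[OF refl], subst D.D_mult) (auto intro!: Sintro u SG simp: dydy[OF openU u xy])
    finally show ?thesis by (simp add: sum.distrib)
  qed
  have "dy j (spray F u) x y = dy j (\<lambda>x y. \<Sum>i\<in>UNIV. y $ i * dx i u x y) x y
      - 2 * dy j (\<lambda>x y. \<Sum>i\<in>UNIV. sprayG F i x y * dy i u x y) x y"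
    unfolding e by (subst D.D_diff) (auto intro!: SA SB Sintro simp: D.D_cmult[OF SB])
  also have "\<dots> = spray F (dy j u) x y + dx j u x y - 2 * (\<Sum>l\<in>UNIV. dy j (sprayG F l) x y * dy l u x y)"
    unfolding A B by (simp add: spray_def algebra_simps)
  finally show ?thesis .
qed

lemma key:
  assumes xy: "x \<in> U" "y \<noteq> 0" and u: "smooth_T0 U u"
    and hyp: "\<And>i. eqOn U (spray F (dy i u)) (dx i u)"
  shows "spray F (dy j (dy i u)) x y = (\<Sum>l\<in>UNIV. dy j (sprayG F l) x y * dy l (dy i u) x y)
           + (\<Sum>l\<in>UNIV. dy i (sprayG F l) x y * dy l (dy j u) x y)"
proof -
  have c1: "dy j (spray F (dy i u)) x y = spray F (dy j (dy i u)) x y + dx j (dy i u) x y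
           - 2 * (\<Sum>l\<in>UNIV. dy j (sprayG F l) x y * dy l (dy i u) x y)"
    by (rule comm[OF xy smooth_dy[OF u]])
  have c2: "dy i (spray F (dy j u)) x y = spray F (dy i (dy j u)) x y + dx i (dy j u) x y
           - 2 * (\<Sum>l\<in>UNIV. dy i (sprayG F l) x y * dy l (dy j u) x y)"
    by (rule comm[OF xy smooth_dy[OF u]])
  have l1: "dy j (spray F (dy i u)) x y = dy j (dx i u) x y"
    using pd_local[OF openU hyp[of i] xy, of "(0, axis j 1)"] by (simp add: dy_pd)
  have l2: "dy i (spray F (dy j u)) x y = dy i (dx j u) x y"
    using pd_local[OF openU hyp[of j] xy, of "(0, axis i 1)"] by (simp add: dy_pd)
  have s: "spray F (dy i (dy j u)) x y = spray F (dy j (dy i u)) x y"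
    by (rule spray_local[OF xy]) (use dydy[OF openU u] in \<open>auto simp: eqOn_def\<close>)
  have m1: "dy j (dx i u) x y = dx i (dy j u) x y" using dxdy[OF openU u xy] by simp
  have m2: "dy i (dx j u) x y = dx j (dy i u) x y" using dxdy[OF openU u xy] by simp
  show ?thesis using c1 c2 l1 l2 s m1 m2 by linarith
qed

definition Nm :: "real^'n \<Rightarrow> real^'n \<Rightarrow> real^'n^'n" where
  "Nm x y = (\<chi> i j. dy j (sprayG F i) x y)"

lemma SN: "smooth_T0 U (\<lambda>x y. Nm x y $ i $ j)"
  unfolding Nm_def by (simp add: smooth_dy SG)

lemma I5': "eqOn U (spray F (dy i (\<lambda>x y. (F x y)\<^sup>2))) (dx i (\<lambda>x y. (F x y)\<^sup>2))"
  using I5 by (simp add: eqOn_def)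

definition DMs :: "(real^'n \<Rightarrow> real^'n \<Rightarrow> real^'n^'n) \<Rightarrow> real^'n \<Rightarrow> real^'n \<Rightarrow> real^'n^'n" where
  "DMs A x y = (\<chi> i j. spray F (\<lambda>x y. A x y $ i $ j) x y)"

lemma spray_g:
  assumes xy: "x \<in> U" "y \<noteq> 0"
  shows "DMs (\<lambda>x y. gmat F x y) x y = transpose (Nm x y) ** gmat F x y + gmat F x y ** Nm x y"
proof -
  interpret SP: derivn "\<lambda>f. spray F f x y" "smooth_T0 U" x y by (rule derivn_spray[OF openU xy])
  let ?h = "\<lambda>x y. (F x y)\<^sup>2"
  have "spray F (\<lambda>x y. gmat F x y $ k $ j) x y
      = (transpose (Nm x y) ** gmat F x y + gmat F x y ** Nm x y) $ k $ j" for k j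
  proof -
    have e: "(\<lambda>x y. gmat F x y $ k $ j) = (\<lambda>x y. 1/2 * dy k (dy j ?h) x y)" by (simp add: gmat_def)
    have "spray F (\<lambda>x y. gmat F x y $ k $ j) x y = 1/2 * spray F (dy k (dy j ?h)) x y"
      unfolding e by (rule SP.D_cmult) (intro Sintro Sh)
    also have "\<dots> = 1/2 * ((\<Sum>l\<in>UNIV. dy k (sprayG F l) x y * dy l (dy j ?h) x y)
           + (\<Sum>l\<in>UNIV. dy j (sprayG F l) x y * dy l (dy k ?h) x y))"
      by (simp add: key[OF xy Sh I5'])
    also have "\<dots> = (\<Sum>l\<in>UNIV. dy k (sprayG F l) x y * gmat F x y $ l $ j)
           + (\<Sum>l\<in>UNIV. gmat F x y $ k $ l * dy j (sprayG F l) x y)"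
    proof -
      have a: "dy l (dy j ?h) x y = 2 * gmat F x y $ l $ j" for l by (simp add: gmat_def)
      have b: "dy l (dy k ?h) x y = 2 * gmat F x y $ k $ l" for l using gsym[OF xy, of l k] by (simp add: gmat_def)
      show ?thesis by (simp add: a b sum_distrib_left distrib_left mult_ac)
    qed
    also have "\<dots> = (transpose (Nm x y) ** gmat F x y + gmat F x y ** Nm x y) $ k $ j"
      by (simp add: matrix_matrix_mult_def Nm_def transpose_def)
    finally show ?thesis .
  qed
  then show ?thesis by (simp add: DMs_def vec_eq_iff)
qed

lemma spray_detg:
  assumes xy: "x \<in> U" "y \<noteq> 0"
  shows "spray F (\<lambda>x y. det (gmat F x y)) x y = 2 * trace (Nm x y) * det (gmat F x y)"
proof -
  interpret SP: derivn "\<lambda>f. spray F f x y" "smooth_T0 U" x y by (rule derivn_spray[OF openU xy])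
  have CM: "SP.CM (\<lambda>x y. gmat F x y)" by (simp add: SP.CM_def Sg)
  have DM: "SP.DM (\<lambda>x y. gmat F x y) = transpose (Nm x y) ** gmat F x y + gmat F x y ** Nm x y"
    using spray_g[OF xy] by (simp add: SP.DM_def DMs_def)
  show ?thesis
    using SP.D_det[OF CM] jacobi_combo[of "transpose (Nm x y)" "gmat F x y" "Nm x y"]
    by (simp add: DM trace_transpose)
qed

lemma Fnz:
  assumes xy: "x \<in> U" "y \<noteq> 0"
  shows "F x y \<noteq> 0"
proof
  assume F0: "F x y = 0"
  interpret D: derivn "\<lambda>f. dy i f x y" "smooth_T0 U" x y for i by (rule derivn_dy[OF openU xy])
  have hh: "(\<lambda>x y. (F x y)\<^sup>2) = (\<lambda>x y. F x y * F x y)" by (simp add: power2_eq_square)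
  have d0: "dy i (\<lambda>x y. (F x y)\<^sup>2) x y = 0" for i
    unfolding hh by (subst D.D_mult) (simp_all add: SF F0)
  have "(gmat F x y *v y) $ i = 0" for i
  proof -
    have "(gmat F x y *v y) $ i = (\<Sum>l\<in>UNIV. gmat F x y $ l $ i * y $ l)"
      using gsym[OF xy] by (simp add: matrix_vector_mult_def)
    also have "\<dots> = 1/2 * (\<Sum>l\<in>UNIV. y $ l * dy l (dy i (\<lambda>x y. (F x y)\<^sup>2)) x y)"
      by (simp add: gmat_def sum_distrib_left mult_ac)
    also have "\<dots> = 0" using eul_hk[OF xy, of i] d0[of i] by simp
    finally show ?thesis .
  qed
  then have "gmat F x y *v y = 0" by (simp add: vec_eq_iff)
  then have "y = 0" by (rule det_nz_kernel[OF detg[OF xy]])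
  then show False using xy by simp
qed

lemma sprayF0:
  assumes xy: "x \<in> U" "y \<noteq> 0"
  shows "spray F F x y = 0"
proof -
  interpret SP: derivn "\<lambda>f. spray F f x y" "smooth_T0 U" x y by (rule derivn_spray[OF openU xy])
  have hh: "(\<lambda>x y. (F x y)\<^sup>2) = (\<lambda>x y. F x y * F x y)" by (simp add: power2_eq_square)
  have "0 = spray F (\<lambda>x y. (F x y)\<^sup>2) x y" using I4[OF xy] by simp
  also have "\<dots> = 2 * F x y * spray F F x y" unfolding hh by (subst SP.D_mult) (simp_all add: SF)
  finally show ?thesis using Fnz[OF xy] by simp
qed

end


lemma dy_xonly: "dy j (\<lambda>x y. \<phi> x) x y = 0"
  by (simp add: dy_def)

lemma dy_dx_xonly: "dy j (dx m (\<lambda>x y. \<phi> x)) x y = 0"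
  by (simp add: dy_def dx_def)

locale finsS = fins U F for U :: "(real^'n::finite) set" and F +
  fixes \<sigma> :: "real^'n \<Rightarrow> real"
  assumes sigma_pos: "\<forall>x\<in>U. \<sigma> x > 0"
    and sigma_smooth: "smooth_T0 U (\<lambda>x y. \<sigma> x)"
begin

definition tau :: "'n tfun" where
  "tau x y = 1/4 * ln (det (gmat F x y) * det (gmat F x y)) - 1/2 * ln (\<sigma> x)"

lemma tau_eq: "eqOn U (distortion \<sigma> F) tau"
proof -
  have "distortion \<sigma> F x y = tau x y" if xy: "x \<in> U" "y \<noteq> 0" for x y
  proof -
    let ?d = "det (gmat F x y)"
    have d: "?d \<noteq> 0" by (rule detg[OF xy])
    have s: "\<sigma> x > 0" using sigma_pos xy by auto
    have "ln (\<bar>?d\<bar> / \<sigma> x) = ln \<bar>?d\<bar> - ln (\<sigma> x)" using d s by (simp add: ln_div)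
    moreover have "ln (?d * ?d) = 2 * ln \<bar>?d\<bar>"
    proof -
      have e: "?d * ?d = \<bar>?d\<bar> * \<bar>?d\<bar>" by (simp add: abs_mult_self_eq)
      have pos: "\<bar>?d\<bar> > 0" using d by simp
      have l: "ln (\<bar>?d\<bar> * \<bar>?d\<bar>) = (if \<bar>?d\<bar> \<noteq> 0 \<and> \<bar>?d\<bar> \<noteq> 0 then ln \<bar>?d\<bar> + ln \<bar>?d\<bar> else 0)"
        by (rule ln_mult)
      have c: "(\<bar>?d\<bar> \<noteq> 0 \<and> \<bar>?d\<bar> \<noteq> 0) = True" using pos by simp
      from l have "ln (\<bar>?d\<bar> * \<bar>?d\<bar>) = ln \<bar>?d\<bar> + ln \<bar>?d\<bar>" unfolding c if_True .
      then show ?thesis unfolding e by simp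
    qed
    ultimately show ?thesis by (simp add: distortion_def tau_def)
  qed
  then show ?thesis by (simp add: eqOn_def)
qed

lemma Stau: "smooth_T0 U tau"
proof -
  have e: "tau = (\<lambda>x y. 1/4 * ln (det (gmat F x y) * det (gmat F x y)) - 1/2 * ln (\<sigma> x))"
    by (simp add: tau_def fun_eq_iff)
  show ?thesis unfolding e
  proof (intro Sintro S_ln[OF openU] Sdetg sigma_smooth)
    show "\<forall>x y. x \<in> U \<longrightarrow> y \<noteq> 0 \<longrightarrow> 0 < det (gmat F x y) * det (gmat F x y)"
      using detg by (simp add: zero_less_mult_iff) (metis linorder_neqE_linordered_idom)
    show "\<forall>x y. x \<in> U \<longrightarrow> y \<noteq> 0 \<longrightarrow> 0 < \<sigma> x" using sigma_pos by auto
  qed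
qed

lemma spray_ln:
  assumes xy: "x \<in> U" "y \<noteq> 0" and f: "smooth_T0 U f" and pos: "f x y > 0"
  shows "spray F (\<lambda>x y. ln (f x y)) x y = spray F f x y * inverse (f x y)"
proof -
  have d: "dif f x y" by (rule smooth_dif[OF f xy])
  show ?thesis
    unfolding spray_def dx_pd dy_pd pd_ln[OF d pos]
    by (simp add: sum_distrib_left sum_distrib_right right_diff_distrib left_diff_distrib mult_ac)
qed

definition trN :: "'n tfun" where "trN x y = (\<Sum>k\<in>UNIV. dy k (sprayG F k) x y)"

lemma StrN: "smooth_T0 U trN"
proof -
  have e: "trN = (\<lambda>x y. \<Sum>k\<in>UNIV. dy k (sprayG F k) x y)" by (simp add: trN_def fun_eq_iff)
  show ?thesis unfolding e by (intro Sintro SG) simp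
qed

lemma trace_Nm: "trace (Nm x y) = trN x y"
  by (simp add: trace_def Nm_def trN_def)

definition Sform :: "'n tfun" where
  "Sform x y = trN x y - 1/2 * ((\<Sum>m\<in>UNIV. y $ m * dx m (\<lambda>x y. \<sigma> x) x y) * inverse (\<sigma> x))"

lemma spray_sigma: "spray F (\<lambda>x y. \<sigma> x) x y = (\<Sum>m\<in>UNIV. y $ m * dx m (\<lambda>x y. \<sigma> x) x y)"
  by (simp add: spray_def dy_xonly)

lemma S_eq_Sform: "eqOn U (Sfun \<sigma> F) Sform"
proof -
  have "Sfun \<sigma> F x y = Sform x y" if xy: "x \<in> U" "y \<noteq> 0" for x y
  proof -
    interpret SP: derivn "\<lambda>f. spray F f x y" "smooth_T0 U" x y by (rule derivn_spray[OF openU xy])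
    let ?d = "\<lambda>x y. det (gmat F x y)"
    have d: "?d x y \<noteq> 0" by (rule detg[OF xy])
    have s: "\<sigma> x > 0" using sigma_pos xy by auto
    have dd: "?d x y * ?d x y > 0" using d by (simp add: zero_less_mult_iff) (metis linorder_neqE_linordered_idom)
    have Sdd: "smooth_T0 U (\<lambda>x y. ?d x y * ?d x y)" by (intro Sintro Sdetg)
    have "Sfun \<sigma> F x y = spray F tau x y"
      unfolding Sfun_def by (rule spray_local[OF xy tau_eq])
    also have "\<dots> = 1/4 * spray F (\<lambda>x y. ln (?d x y * ?d x y)) x y - 1/2 * spray F (\<lambda>x y. ln (\<sigma> x)) x y"
    proof -
      have e: "tau = (\<lambda>x y. 1/4 * ln (?d x y * ?d x y) - 1/2 * ln (\<sigma> x))" by (simp add: tau_def fun_eq_iff)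
      have l1: "smooth_T0 U (\<lambda>x y. ln (?d x y * ?d x y))"
        by (rule S_ln[OF openU Sdd]) (use detg in \<open>simp add: zero_less_mult_iff, metis linorder_neqE_linordered_idom\<close>)
      have l2: "smooth_T0 U (\<lambda>x y. ln (\<sigma> x))"
        by (rule S_ln[OF openU sigma_smooth]) (use sigma_pos in auto)
      show ?thesis unfolding e
        using SP.D_diff[OF S_cmult[OF openU l1, of "1/4"] S_cmult[OF openU l2, of "1/2"]]
          SP.D_cmult[OF l1, of "1/4"] SP.D_cmult[OF l2, of "1/2"]
        by linarith
    qed
    also have "\<dots> = 1/4 * (spray F (\<lambda>x y. ?d x y * ?d x y) x y * inverse (?d x y * ?d x y))
        - 1/2 * (spray F (\<lambda>x y. \<sigma> x) x y * inverse (\<sigma> x))"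
      using spray_ln[OF xy Sdd dd] spray_ln[OF xy sigma_smooth s] by simp
    also have "spray F (\<lambda>x y. ?d x y * ?d x y) x y = 4 * trN x y * (?d x y * ?d x y)"
      by (subst SP.D_mult) (simp_all add: Sdetg spray_detg[OF xy] trace_Nm)
    finally have fin: "Sfun \<sigma> F x y = 1/4 * (4 * trN x y * (?d x y * ?d x y) * inverse (?d x y * ?d x y))
        - 1/2 * (spray F (\<lambda>x y. \<sigma> x) x y * inverse (\<sigma> x))" .
    have dnz: "?d x y * ?d x y \<noteq> 0" using d by simp
    have inv0: "(?d x y * ?d x y) * inverse (?d x y * ?d x y) = 1" by (rule right_inverse[OF dnz])
    have inv: "4 * trN x y * (?d x y * ?d x y) * inverse (?d x y * ?d x y) = 4 * trN x y"
      using inv0 by (simp only: mult.assoc)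
    show ?thesis using fin unfolding inv by (simp add: Sform_def spray_sigma)
  qed
  then show ?thesis by (simp add: eqOn_def)
qed

lemma SS: "smooth_T0 U (Sfun \<sigma> F)"
proof -
  have "eqOn U (spray F tau) (Sfun \<sigma> F)"
    unfolding eqOn_def Sfun_def using spray_local[OF _ _ tau_eq] by auto
  then show ?thesis by (rule S_eq[OF openU Sspray[OF Stau]])
qed

end


lemma mm_neg_l: "(- (A::real^'n::finite^'m)) ** B = - (A ** B)"
  by (simp add: matrix_matrix_mult_def vec_eq_iff sum_negf)
lemma mm_scale_l: "((c::real) *\<^sub>R (A::real^'n::finite^'m)) ** B = c *\<^sub>R (A ** B)"
  by (simp add: matrix_matrix_mult_def vec_eq_iff sum_distrib_left mult_ac)
lemma mm_scale_r: "(A::real^'n::finite^'m) ** ((c::real) *\<^sub>R B) = c *\<^sub>R (A ** B)"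
  by (simp add: matrix_matrix_mult_def vec_eq_iff sum_distrib_left mult_ac)

context finsS begin

lemma Ssd: "smooth_T0 U (dx m (\<lambda>x y. \<sigma> x))" by (rule smooth_dx[OF sigma_smooth])
lemma Sinvsig: "smooth_T0 U (\<lambda>x y. inverse (\<sigma> x))"
  by (rule S_inv[OF openU sigma_smooth]) (use sigma_pos in auto)

lemma dyS_eq: "eqOn U (dy j (Sfun \<sigma> F))
    (\<lambda>x y. dy j trN x y - 1/2 * (dx j (\<lambda>x y. \<sigma> x) x y * inverse (\<sigma> x)))"
proof -
  have "dy j (Sfun \<sigma> F) x y = dy j trN x y - 1/2 * (dx j (\<lambda>x y. \<sigma> x) x y * inverse (\<sigma> x))"
    if xy: "x \<in> U" "y \<noteq> 0" for x y
  proof -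
    interpret D: derivn "\<lambda>f. dy j f x y" "smooth_T0 U" x y by (rule derivn_dy[OF openU xy])
    have "dy j (Sfun \<sigma> F) x y = dy j Sform x y"
      using pd_local[OF openU S_eq_Sform xy, of "(0, axis j 1)"] by (simp add: dy_pd)
    also have "Sform = (\<lambda>x y. trN x y - 1/2 * ((\<Sum>m\<in>UNIV. y $ m * dx m (\<lambda>x y. \<sigma> x) x y) * inverse (\<sigma> x)))"
      by (simp add: Sform_def fun_eq_iff)
    finally have 1: "dy j (Sfun \<sigma> F) x y = dy j (\<lambda>x y. trN x y - 1/2 * ((\<Sum>m\<in>UNIV. y $ m * dx m (\<lambda>x y. \<sigma> x) x y) * inverse (\<sigma> x))) x y" .
    have SA: "smooth_T0 U (\<lambda>x y. \<Sum>m\<in>UNIV. y $ m * dx m (\<lambda>x y. \<sigma> x) x y)" by (intro Sintro Ssd) simp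
    have 2: "dy j (\<lambda>x y. \<Sum>m\<in>UNIV. y $ m * dx m (\<lambda>x y. \<sigma> x) x y) x y = dx j (\<lambda>x y. \<sigma> x) x y"
    proof -
      have "dy j (\<lambda>x y. \<Sum>m\<in>UNIV. y $ m * dx m (\<lambda>x y. \<sigma> x) x y) x y
          = (\<Sum>m\<in>UNIV. dy j (\<lambda>x y. y $ m * dx m (\<lambda>x y. \<sigma> x) x y) x y)"
        by (rule D.D_sum) (auto intro!: Sintro Ssd)
      also have "\<dots> = (\<Sum>m\<in>UNIV. if m = j then dx m (\<lambda>x y. \<sigma> x) x y else 0)"
        by (rule sum.cong[OF refl], subst D.D_mult) (auto intro!: Sintro Ssd simp: dy_yc dy_dx_xonly)
      finally show ?thesis by simp
    qed
    have 3: "dy j (\<lambda>x y. (\<Sum>m\<in>UNIV. y $ m * dx m (\<lambda>x y. \<sigma> x) x y) * inverse (\<sigma> x)) x y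
        = dx j (\<lambda>x y. \<sigma> x) x y * inverse (\<sigma> x)"
      by (subst D.D_mult) (auto intro!: SA Sinvsig simp: 2 dy_xonly)
    have SB: "smooth_T0 U (\<lambda>x y. (\<Sum>m\<in>UNIV. y $ m * dx m (\<lambda>x y. \<sigma> x) x y) * inverse (\<sigma> x))"
      by (rule S_mult[OF openU SA Sinvsig])
    show ?thesis unfolding 1
      using D.D_diff[OF StrN S_cmult[OF openU SB, of "1/2"]] D.D_cmult[OF SB, of "1/2"] 3 by linarith
  qed
  then show ?thesis by (simp add: eqOn_def)
qed

lemma ddS: assumes xy: "x \<in> U" "y \<noteq> 0"
  shows "dy k (dy j (Sfun \<sigma> F)) x y = dy k (dy j trN) x y"
proof -
  interpret D: derivn "\<lambda>f. dy k f x y" "smooth_T0 U" x y by (rule derivn_dy[OF openU xy])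
  have "dy k (dy j (Sfun \<sigma> F)) x y
      = dy k (\<lambda>x y. dy j trN x y - 1/2 * (dx j (\<lambda>x y. \<sigma> x) x y * inverse (\<sigma> x))) x y"
    using pd_local[OF openU dyS_eq xy, of "(0, axis k 1)"] by (simp add: dy_pd)
  also have "\<dots> = dy k (dy j trN) x y"
  proof -
    have SB: "smooth_T0 U (\<lambda>x y. dx j (\<lambda>x y. \<sigma> x) x y * inverse (\<sigma> x))"
      by (rule S_mult[OF openU Ssd Sinvsig])
    have 3: "dy k (\<lambda>x y. dx j (\<lambda>x y. \<sigma> x) x y * inverse (\<sigma> x)) x y = 0"
      by (simp add: D.D_mult[OF Ssd Sinvsig] dy_dx_xonly dy_xonly)
    show ?thesis
      using D.D_diff[OF smooth_dy[OF StrN, of j] S_cmult[OF openU SB, of "1/2"]] D.D_cmult[OF SB, of "1/2"] 3 by linarith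
  qed
  finally show ?thesis .
qed

lemma SG3: "smooth_T0 U (dy j (dy m (sprayG F m)))"
  by (intro smooth_dy SG)

lemma meanE_eq: assumes xy: "x \<in> U" "y \<noteq> 0"
  shows "meanE F k j x y = 1/2 * dy k (dy j (Sfun \<sigma> F)) x y"
proof -
  have e1: "eqOn U (dy j trN) (\<lambda>x y. \<Sum>m\<in>UNIV. dy j (dy m (sprayG F m)) x y)"
  proof -
    have "dy j trN x y = (\<Sum>m\<in>UNIV. dy j (dy m (sprayG F m)) x y)" if xy: "x \<in> U" "y \<noteq> 0" for x y
    proof -
      interpret D: derivn "\<lambda>f. dy j f x y" "smooth_T0 U" x y by (rule derivn_dy[OF openU xy])
      have e: "trN = (\<lambda>x y. \<Sum>m\<in>UNIV. dy m (sprayG F m) x y)" by (simp add: trN_def fun_eq_iff)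
      show ?thesis unfolding e by (rule D.D_sum) (auto intro!: smooth_dy SG)
    qed
    then show ?thesis by (simp add: eqOn_def)
  qed
  interpret D: derivn "\<lambda>f. dy k f x y" "smooth_T0 U" x y by (rule derivn_dy[OF openU xy])
  have "dy k (dy j trN) x y = dy k (\<lambda>x y. \<Sum>m\<in>UNIV. dy j (dy m (sprayG F m)) x y) x y"
    using pd_local[OF openU e1 xy, of "(0, axis k 1)"] by (simp add: dy_pd)
  also have "\<dots> = (\<Sum>m\<in>UNIV. dy k (dy j (dy m (sprayG F m))) x y)"
    by (rule D.D_sum) (auto intro!: SG3)
  finally show ?thesis by (simp add: meanE_def berwald_def ddS[OF xy])
qed

lemma SE: "smooth_T0 U (\<lambda>x y. meanE F k j x y)"
proof (rule S_eq[OF openU])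
  show "smooth_T0 U (\<lambda>x y. 1/2 * dy k (dy j (Sfun \<sigma> F)) x y)" by (intro Sintro SS)
  show "eqOn U (\<lambda>x y. 1/2 * dy k (dy j (Sfun \<sigma> F)) x y) (\<lambda>x y. meanE F k j x y)"
    using meanE_eq by (simp add: eqOn_def)
qed

lemma Esym: assumes xy: "x \<in> U" "y \<noteq> 0" shows "meanE F k j x y = meanE F j k x y"
  using meanE_eq[OF xy, of k j] meanE_eq[OF xy, of j k] dydy[OF openU SS xy, of k j] by linarith

definition Em :: "real^'n \<Rightarrow> real^'n \<Rightarrow> real^'n^'n" where
  "Em x y = (\<chi> k j. meanE F k j x y)"

lemma spray_gi:
  assumes xy: "x \<in> U" "y \<noteq> 0"
  shows "DMs (\<lambda>x y. ginv F x y) x y = - (ginv F x y ** transpose (Nm x y) + Nm x y ** ginv F x y)"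
proof -
  interpret SP: derivn "\<lambda>f. spray F f x y" "smooth_T0 U" x y by (rule derivn_spray[OF openU xy])
  let ?g = "gmat F x y" and ?gi = "ginv F x y" and ?N = "Nm x y"
  have CMg: "SP.CM (\<lambda>x y. gmat F x y)" by (simp add: SP.CM_def Sg)
  have CMgi: "SP.CM (\<lambda>x y. ginv F x y)" by (simp add: SP.CM_def Sgi)
  have DMg: "SP.DM (\<lambda>x y. gmat F x y) = transpose ?N ** ?g + ?g ** ?N"
    using spray_g[OF xy] by (simp add: SP.DM_def DMs_def)
  have "SP.DM (\<lambda>x y. ginv F x y ** gmat F x y) = SP.DM (\<lambda>x y. mat 1)"
  proof -
    have "spray F (\<lambda>x y. (ginv F x y ** gmat F x y) $ i $ j) x y = spray F (\<lambda>x y. (mat 1::real^'n^'n) $ i $ j) x y" for i j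
      by (rule spray_local[OF xy]) (simp add: eqOn_def gi_g)
    then show ?thesis by (simp add: SP.DM_def)
  qed
  also have "\<dots> = 0" by (simp add: SP.DM_def mat_def SP.D_const vec_eq_iff)
  finally have 0: "SP.DM (\<lambda>x y. ginv F x y) ** ?g + ?gi ** SP.DM (\<lambda>x y. gmat F x y) = 0"
    using SP.DM_mult[OF CMgi CMg] by simp
  have "SP.DM (\<lambda>x y. ginv F x y) = SP.DM (\<lambda>x y. ginv F x y) ** (?g ** ?gi)"
    by (simp add: g_gi[OF xy])
  also have "\<dots> = (SP.DM (\<lambda>x y. ginv F x y) ** ?g) ** ?gi" by (simp add: matrix_mul_assoc)
  also have "SP.DM (\<lambda>x y. ginv F x y) ** ?g = - (?gi ** SP.DM (\<lambda>x y. gmat F x y))"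
    using 0 by (simp add: eq_neg_iff_add_eq_0)
  also have "- (?gi ** SP.DM (\<lambda>x y. gmat F x y)) ** ?gi = - (?gi ** transpose ?N + ?N ** ?gi)"
  proof -
    have a: "(?gi ** (transpose ?N ** ?g)) ** ?gi = ?gi ** transpose ?N"
      by (metis matrix_mul_assoc g_gi[OF xy] matrix_mul_rid)
    have b: "(?gi ** (?g ** ?N)) ** ?gi = ?N ** ?gi"
      by (metis matrix_mul_assoc gi_g[OF xy] matrix_mul_lid)
    show ?thesis unfolding DMg mm_neg_l matrix_add_ldistrib mm_add_rdistrib a b ..
  qed
  finally show ?thesis by (simp add: SP.DM_def DMs_def)
qed

end

locale finsSC = finsS U F \<sigma> for U :: "(real^'n::finite) set" and F and \<sigma> +
  assumes chi0: "\<forall>i. \<forall>x\<in>U. \<forall>y. y \<noteq> 0 \<longrightarrow> chi \<sigma> F i x y = 0"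
begin

lemma chi_hyp: "eqOn U (spray F (dy i (Sfun \<sigma> F))) (dx i (Sfun \<sigma> F))"
  using chi0 by (simp add: eqOn_def chi_def)

lemma spray_E:
  assumes xy: "x \<in> U" "y \<noteq> 0"
  shows "DMs Em x y = transpose (Nm x y) ** Em x y + Em x y ** Nm x y"
proof -
  interpret SP: derivn "\<lambda>f. spray F f x y" "smooth_T0 U" x y by (rule derivn_spray[OF openU xy])
  let ?S = "Sfun \<sigma> F"
  have "spray F (\<lambda>x y. Em x y $ k $ j) x y = (transpose (Nm x y) ** Em x y + Em x y ** Nm x y) $ k $ j" for k j
  proof -
    have "spray F (\<lambda>x y. Em x y $ k $ j) x y = spray F (\<lambda>x y. 1/2 * dy k (dy j ?S) x y) x y"
      by (rule spray_local[OF xy]) (simp add: eqOn_def Em_def meanE_eq)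
    also have "\<dots> = 1/2 * spray F (dy k (dy j ?S)) x y"
      by (rule SP.D_cmult) (intro Sintro SS)
    also have "\<dots> = 1/2 * ((\<Sum>l\<in>UNIV. dy k (sprayG F l) x y * dy l (dy j ?S) x y)
           + (\<Sum>l\<in>UNIV. dy j (sprayG F l) x y * dy l (dy k ?S) x y))"
      by (simp add: key[OF xy SS chi_hyp])
    also have "\<dots> = (\<Sum>l\<in>UNIV. dy k (sprayG F l) x y * meanE F l j x y)
           + (\<Sum>l\<in>UNIV. meanE F k l x y * dy j (sprayG F l) x y)"
    proof -
      have a: "dy l (dy j ?S) x y = 2 * meanE F l j x y" for l by (simp add: meanE_eq[OF xy])
      have b: "dy l (dy k ?S) x y = 2 * meanE F k l x y" for l using Esym[OF xy, of k l] by (simp add: meanE_eq[OF xy])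
      show ?thesis by (simp add: a b sum_distrib_left distrib_left mult_ac)
    qed
    also have "\<dots> = (transpose (Nm x y) ** Em x y + Em x y ** Nm x y) $ k $ j"
      by (simp add: matrix_matrix_mult_def Nm_def transpose_def Em_def)
    finally show ?thesis .
  qed
  then show ?thesis by (simp add: DMs_def vec_eq_iff)
qed

end


context finsS begin

lemma Emat_eq: "Emat F x y = (2 * F x y) *\<^sub>R (ginv F x y ** Em x y)"
  by (simp add: Emat_def Em_def matrix_matrix_mult_def vec_eq_iff)

lemma SEm: "smooth_T0 U (\<lambda>x y. Em x y $ i $ j)"
  by (simp add: Em_def SE)

lemma SEmat: "smooth_T0 U (\<lambda>x y. Emat F x y $ i $ j)"
proof -
  have e: "(\<lambda>x y. Emat F x y $ i $ j) = (\<lambda>x y. 2 * F x y * (\<Sum>k\<in>UNIV. ginv F x y $ i $ k * meanE F k j x y))"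
    by (simp add: Emat_def)
  show ?thesis unfolding e by (intro Sintro SF Sgi SE) simp
qed

lemma gmat_hom: assumes xy: "x \<in> U" "y \<noteq> 0" and c: "c > 0"
  shows "gmat F x (c *\<^sub>R y) = gmat F x y"
proof -
  have h: "hom U (2 - 1 - 1) (dy i (dy j (\<lambda>x y. (F x y)\<^sup>2)))" for i j
    by (rule hom_dy[OF openU smooth_dy[OF Sh] hom_dy[OF openU Sh homh]])
  have "dy i (dy j (\<lambda>x y. (F x y)\<^sup>2)) x (c *\<^sub>R y) = dy i (dy j (\<lambda>x y. (F x y)\<^sup>2)) x y" for i j
    using h[of i j] xy c unfolding hom_def by simp
  then show ?thesis by (simp add: gmat_def vec_eq_iff)
qed

lemma ginv_hom: assumes xy: "x \<in> U" "y \<noteq> 0" and c: "c > 0"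
  shows "ginv F x (c *\<^sub>R y) = ginv F x y"
  by (simp add: ginv_def gmat_hom[OF assms])

lemma sprayG_hom: "hom U 2 (sprayG F i)"
  unfolding hom_def
proof (intro ballI allI impI)
  fix x y c assume x: "x \<in> U" and y: "(y::real^'n) \<noteq> 0" and c: "(c::real) > 0"
  have h1: "hom U (2 - 1) (dx k (dy j (\<lambda>x y. (F x y)\<^sup>2)))" for j k
    by (rule hom_dx[OF openU smooth_dy[OF Sh] hom_dy[OF openU Sh homh]])
  have h2: "hom U 2 (dx j (\<lambda>x y. (F x y)\<^sup>2))" for j
    by (rule hom_dx[OF openU Sh homh])
  have a: "dx k (dy j (\<lambda>x y. (F x y)\<^sup>2)) x (c *\<^sub>R y) = c * dx k (dy j (\<lambda>x y. (F x y)\<^sup>2)) x y" for j k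
    using h1[of k j] x y c unfolding hom_def by simp
  have b: "dx j (\<lambda>x y. (F x y)\<^sup>2) x (c *\<^sub>R y) = c^2 * dx j (\<lambda>x y. (F x y)\<^sup>2) x y" for j
    using h2[of j] x y c unfolding hom_def by simp
  have P: "PP j x (c *\<^sub>R y) = c^2 * PP j x y" for j
    unfolding PP_def a b by (simp add: sum_distrib_left right_diff_distrib power2_eq_square mult_ac)
  show "sprayG F i x (c *\<^sub>R y) = c powr 2 * sprayG F i x y"
    using c by (simp add: sprayG_PP P ginv_hom[OF x y c] sum_distrib_left mult_ac)
qed

lemma meanE_hom: assumes xy: "x \<in> U" "y \<noteq> 0" and c: "c > 0"
  shows "meanE F k j x (c *\<^sub>R y) = inverse c * meanE F k j x y"
proof -
  have h: "hom U (2 - 1 - 1 - 1) (dy k (dy j (dy m (sprayG F m))))" for m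
    by (rule hom_dy[OF openU smooth_dy[OF smooth_dy[OF SG]] hom_dy[OF openU smooth_dy[OF SG] hom_dy[OF openU SG sprayG_hom]]])
  have "dy k (dy j (dy m (sprayG F m))) x (c *\<^sub>R y) = c powr (-1) * dy k (dy j (dy m (sprayG F m))) x y" for m
    using h[of m] xy c unfolding hom_def by simp
  then show ?thesis using c by (simp add: meanE_def berwald_def sum_distrib_left powr_minus mult_ac)
qed

lemma Emat_hom: assumes xy: "x \<in> U" "y \<noteq> 0" and c: "c > 0"
  shows "Emat F x (c *\<^sub>R y) = Emat F x y"
proof -
  have F: "F x (c *\<^sub>R y) = c * F x y" using homF xy c unfolding hom_def by simp
  have "Emat F x (c *\<^sub>R y) $ i $ j = Emat F x y $ i $ j" for i j
  proof -
    have "Emat F x (c *\<^sub>R y) $ i $ j = 2 * (c * F x y) * (\<Sum>k\<in>UNIV. ginv F x y $ i $ k * (inverse c * meanE F k j x y))"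
      by (simp add: Emat_def F ginv_hom[OF xy c] meanE_hom[OF xy c])
    also have "\<dots> = 2 * F x y * (c * inverse c) * (\<Sum>k\<in>UNIV. ginv F x y $ i $ k * meanE F k j x y)"
      by (simp add: sum_distrib_left mult_ac)
    also have "\<dots> = Emat F x y $ i $ j" using c by (simp add: Emat_def)
    finally show ?thesis .
  qed
  then show ?thesis by (simp add: vec_eq_iff)
qed

end

context finsSC begin

lemma spray_Emat:
  assumes xy: "x \<in> U" "y \<noteq> 0"
  shows "DMs (\<lambda>x y. Emat F x y) x y = Emat F x y ** Nm x y - Nm x y ** Emat F x y"
proof -
  interpret SP: derivn "\<lambda>f. spray F f x y" "smooth_T0 U" x y by (rule derivn_spray[OF openU xy])
  let ?gi = "ginv F x y" and ?E = "Em x y" and ?N = "Nm x y"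
  have CMgi: "SP.CM (\<lambda>x y. ginv F x y)" by (simp add: SP.CM_def Sgi)
  have CME: "SP.CM Em" by (simp add: SP.CM_def SEm)
  have DMgi: "SP.DM (\<lambda>x y. ginv F x y) = - (?gi ** transpose ?N + ?N ** ?gi)"
    using spray_gi[OF xy] by (simp add: SP.DM_def DMs_def)
  have DME: "SP.DM Em = transpose ?N ** ?E + ?E ** ?N"
    using spray_E[OF xy] by (simp add: SP.DM_def DMs_def)
  have DMP: "SP.DM (\<lambda>x y. ginv F x y ** Em x y) = (?gi ** ?E) ** ?N - ?N ** (?gi ** ?E)"
  proof -
    have "SP.DM (\<lambda>x y. ginv F x y ** Em x y) = (- (?gi ** transpose ?N + ?N ** ?gi)) ** ?E + ?gi ** (transpose ?N ** ?E + ?E ** ?N)"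
      using SP.DM_mult[OF CMgi CME] DMgi DME by simp
    also have "\<dots> = (?gi ** ?E) ** ?N - ?N ** (?gi ** ?E)"
      by (simp add: mm_neg_l mm_add_rdistrib mm_diff_rdistrib matrix_add_ldistrib matrix_mul_assoc algebra_simps)
    finally show ?thesis .
  qed
  have SP2F: "spray F (\<lambda>x y. 2 * F x y) x y = 0"
    using SP.D_cmult[OF SF, of 2] sprayF0[OF xy] by simp
  have SPij: "smooth_T0 U (\<lambda>x y. (ginv F x y ** Em x y) $ i $ j)" for i j
    using SP.CM_mult[OF CMgi CME] by (simp add: SP.CM_def)
  have "spray F (\<lambda>x y. Emat F x y $ i $ j) x y = (Emat F x y ** ?N - ?N ** Emat F x y) $ i $ j" for i j
  proof -
    have "spray F (\<lambda>x y. Emat F x y $ i $ j) x y = spray F (\<lambda>x y. (2 * F x y) * (ginv F x y ** Em x y) $ i $ j) x y"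
      by (simp add: Emat_eq)
    also have "\<dots> = 2 * F x y * SP.DM (\<lambda>x y. ginv F x y ** Em x y) $ i $ j"
      using SP.D_mult[OF S_cmult[OF openU SF, of 2] SPij[of i j]] SP2F by (simp add: SP.DM_def)
    also have "\<dots> = (Emat F x y ** ?N - ?N ** Emat F x y) $ i $ j"
      by (simp add: DMP Emat_eq mm_scale_l mm_scale_r right_diff_distrib)
    finally show ?thesis .
  qed
  then show ?thesis by (simp add: DMs_def vec_eq_iff)
qed

end


lemma coeff_monsum:
  fixes c :: "nat \<Rightarrow> real"
  assumes "a \<le> n"
  shows "coeff (\<Sum>b\<le>n. monom (c b) (n - b)) (n - a) = c a"
proof -
  have "coeff (\<Sum>b\<le>n. monom (c b) (n - b)) (n - a) = (\<Sum>b\<le>n. if n - b = n - a then c b else 0)"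
    by (simp add: coeff_sum coeff_monom)
  also have "\<dots> = (\<Sum>b\<le>n. if b = a then c b else 0)"
    by (rule sum.cong) (use assms in auto)
  also have "\<dots> = c a" using assms by simp
  finally show ?thesis .
qed

lemma poly_monsum: fixes c :: "nat \<Rightarrow> real" shows "poly (\<Sum>b\<le>n. monom (c b) (n - b)) t = (\<Sum>b\<le>n. c b * t ^ (n - b))"
  unfolding poly_sum poly_monom ..

lemma coef_unique:
  fixes c d :: "nat \<Rightarrow> real"
  assumes "\<forall>t::real. (\<Sum>b\<le>n. c b * t ^ (n - b)) = (\<Sum>b\<le>n. d b * t ^ (n - b))" "a \<le> n"
  shows "c a = d a"
proof -
  have "poly (\<Sum>b\<le>n. monom (c b) (n - b)) = poly (\<Sum>b\<le>n. monom (d b) (n - b))"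
    using assms(1) by (simp add: fun_eq_iff poly_monsum)
  then have "(\<Sum>b\<le>n. monom (c b) (n - b)) = (\<Sum>b\<le>n. monom (d b) (n - b))"
    by (simp add: poly_eq_poly_eq_iff)
  then show ?thesis using coeff_monsum[OF assms(2), of c] coeff_monsum[OF assms(2), of d] by simp
qed

lemma poly_det: "poly (det (M :: real poly^'n::finite^'n)) t = det (\<chi> i j. poly (M $ i $ j) t)"
  by (simp add: det_def poly_sum poly_prod poly_of_int)

definition PS :: "(real^'n::finite) set \<Rightarrow> (real^'n \<Rightarrow> real^'n \<Rightarrow> real poly) \<Rightarrow> bool" where
  "PS U p \<longleftrightarrow> (\<forall>k. smooth_T0 U (\<lambda>x y. coeff (p x y) k))"

context fixes U :: "(real^'n::finite) set" assumes openU: "open U"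
begin

lemma PS_const: "PS U (\<lambda>x y. q)"
  by (simp add: PS_def S_const[OF openU])

lemma PS_add: "PS U p \<Longrightarrow> PS U q \<Longrightarrow> PS U (\<lambda>x y. p x y + q x y)"
  by (simp add: PS_def S_add[OF openU])

lemma PS_mult: "PS U p \<Longrightarrow> PS U q \<Longrightarrow> PS U (\<lambda>x y. p x y * q x y)"
  unfolding PS_def coeff_mult
  by (intro allI S_sum[OF openU] S_mult[OF openU]) auto

lemma PS_sum: "finite A \<Longrightarrow> (\<And>a. a \<in> A \<Longrightarrow> PS U (f a)) \<Longrightarrow> PS U (\<lambda>x y. \<Sum>a\<in>A. f a x y)"
proof (induction A rule: finite_induct)
  case empty then show ?case using PS_const[of 0] by simp
next
  case (insert a A) then show ?case by (simp add: PS_add)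
qed

lemma PS_prod: "finite A \<Longrightarrow> (\<And>a. a \<in> A \<Longrightarrow> PS U (f a)) \<Longrightarrow> PS U (\<lambda>x y. \<Prod>a\<in>A. f a x y)"
proof (induction A rule: finite_induct)
  case empty then show ?case using PS_const[of 1] by simp
next
  case (insert a A) then show ?case by (simp add: PS_mult)
qed

lemma PS_lin: "smooth_T0 U e \<Longrightarrow> PS U (\<lambda>x y. [:e x y, d:])"
  unfolding PS_def
proof
  fix k assume e: "smooth_T0 U e"
  show "smooth_T0 U (\<lambda>x y. coeff [:e x y, d:] k)"
  proof (cases k)
    case 0 then show ?thesis using e by simp
  next
    case (Suc m) then show ?thesis by (simp add: S_const[OF openU])
  qed
qed

lemma PS_det: "(\<And>i j. PS U (\<lambda>x y. M x y $ i $ j)) \<Longrightarrow> PS U (\<lambda>x y. det (M x y))"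
  unfolding det_def
  by (intro PS_sum PS_mult PS_const PS_prod) (auto simp: finite_permutations)

end

context finsSC begin

definition Qp :: "real^'n \<Rightarrow> real^'n \<Rightarrow> real poly" where
  "Qp x y = det (\<chi> i j. [:Emat F x y $ i $ j, if i = j then 1 else 0:])"

lemma poly_Qp: "poly (Qp x y) t = det (Emat F x y + t *\<^sub>R mat 1)"
proof -
  have "(\<chi> i j. poly ((\<chi> i j. [:Emat F x y $ i $ j, if i = j then 1 else 0:]) $ i $ j) t) = Emat F x y + t *\<^sub>R mat 1"
    by (simp add: vec_eq_iff mat_def)
  then show ?thesis by (simp add: Qp_def poly_det)
qed

lemma PSQ: "PS U Qp"
proof -
  have e: "Qp = (\<lambda>x y. det (\<chi> i j. [:Emat F x y $ i $ j, if i = j then 1 else 0:]))"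
    by (simp add: Qp_def fun_eq_iff)
  show ?thesis unfolding e
    by (rule PS_det[OF openU]) (simp add: PS_lin[OF openU SEmat])
qed

end


theorem theorem1p1:
  fixes U :: "(real^'n::finite) set"
    and F :: "'n tfun"
    and \<sigma> :: "real^'n \<Rightarrow> real"
    and ga :: "nat \<Rightarrow> 'n tfun"
  assumes n2: "CARD('n) \<ge> 2"
    and fin: "finsler U F"
    and sigma_pos: "\<forall>x\<in>U. \<sigma> x > 0"
    and sigma_smooth: "smooth_T0 U (\<lambda>x y. \<sigma> x)"
    and chi0: "\<forall>i. \<forall>x\<in>U. \<forall>y. y \<noteq> 0 \<longrightarrow> chi \<sigma> F i x y = 0"
    and charpoly: "\<forall>x\<in>U. \<forall>y. y \<noteq> 0 \<longrightarrow> (\<forall>\<Lambda>::real.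
        det (Emat F x y + \<Lambda> *\<^sub>R mat 1) = (\<Sum>a\<le>CARD('n). ga a x y * \<Lambda> ^ (CARD('n) - a)))"
  shows "\<forall>a\<in>{1..CARD('n) - 1}. \<forall>x\<in>U. \<forall>y. y \<noteq> 0 \<longrightarrow>
           spray F (\<lambda>x y. trace (matpow (Emat F x y) a)) x y = 0
         \<and> spray F (ga a) x y = 0
         \<and> (\<forall>c>0. trace (matpow (Emat F x (c *\<^sub>R y)) a) = trace (matpow (Emat F x y) a)
                  \<and> ga a x (c *\<^sub>R y) = ga a x y)"
proof -
  interpret L: finsSC U F \<sigma>
    by unfold_locales (fact fin sigma_pos sigma_smooth chi0)+
  have openU: "open U" by (rule L.openU)
  have ga_eq: "ga a x y = coeff (L.Qp x y) (CARD('n) - a)"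
    if xy: "x \<in> U" "y \<noteq> 0" and a: "a \<le> CARD('n)" for a x y
  proof -
    have "poly (L.Qp x y) = poly (\<Sum>b\<le>CARD('n). monom (ga b x y) (CARD('n) - b))"
      using charpoly xy by (simp add: fun_eq_iff L.poly_Qp poly_monsum)
    then have "L.Qp x y = (\<Sum>b\<le>CARD('n). monom (ga b x y) (CARD('n) - b))"
      by (simp add: poly_eq_poly_eq_iff)
    then show ?thesis using coeff_monsum[OF a, of "\<lambda>b. ga b x y"] by simp
  qed
  have Sga: "smooth_T0 U (ga a)" if a: "a \<le> CARD('n)" for a
  proof (rule S_eq[OF openU])
    show "smooth_T0 U (\<lambda>x y. coeff (L.Qp x y) (CARD('n) - a))"
      using L.PSQ by (simp add: PS_def)
    show "eqOn U (\<lambda>x y. coeff (L.Qp x y) (CARD('n) - a)) (ga a)"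
      using ga_eq a by (simp add: eqOn_def)
  qed
  show ?thesis
  proof (intro ballI allI impI conjI)
    fix a x y assume a: "a \<in> {1..CARD('n) - 1}" and x: "x \<in> U" and y: "(y::real^'n) \<noteq> 0"
    have an: "a \<le> CARD('n)" using a by auto
    have xy: "x \<in> U" "y \<noteq> 0" using x y by auto
    interpret SP: derivn "\<lambda>f. spray F f x y" "smooth_T0 U" x y by (rule derivn_spray[OF openU xy])
    let ?E = "Emat F x y" and ?N = "L.Nm x y"
    have CME: "SP.CM (\<lambda>x y. Emat F x y)" by (simp add: SP.CM_def L.SEmat)
    have DME: "SP.DM (\<lambda>x y. Emat F x y) = ?E ** ?N - ?N ** ?E"
      using L.spray_Emat[OF xy] by (simp add: SP.DM_def L.DMs_def)
    show "spray F (\<lambda>x y. trace (matpow (Emat F x y) a)) x y = 0"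
      using SP.D_trace[OF SP.CM_matpow[OF CME, of a]] SP.DM_matpow[OF CME DME, of a]
      by (simp add: trace_comm_zero)
    show "spray F (ga a) x y = 0"
    proof -
      have "(\<Sum>b\<le>CARD('n). spray F (ga b) x y * t ^ (CARD('n) - b)) = (\<Sum>b\<le>CARD('n). 0 * t ^ (CARD('n) - b))"
        for t :: real
      proof -
        let ?M = "\<lambda>x y. Emat F x y + t *\<^sub>R mat 1"
        have CMM: "SP.CM ?M"
          by (simp add: SP.CM_def mat_def L.SEmat S_add[OF openU] S_const[OF openU])
        have DMM: "SP.DM ?M = SP.DM (\<lambda>x y. Emat F x y)"
          by (simp add: SP.DM_def vec_eq_iff mat_def SP.D_add[OF L.SEmat S_const[OF openU]] SP.D_const)
        have DMM': "SP.DM ?M = (- ?N) ** ?M x y + ?M x y ** ?N"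
          unfolding DMM DME
          by (simp add: mm_neg_l matrix_add_ldistrib mm_add_rdistrib mm_scale_l mm_scale_r algebra_simps)
        have D0: "spray F (\<lambda>x y. det (?M x y)) x y = 0"
          using SP.D_det[OF CMM] jacobi_combo[of "- ?N" "?M x y" ?N]
          by (simp add: DMM' trace_def sum_negf)
        have "spray F (\<lambda>x y. \<Sum>b\<le>CARD('n). ga b x y * t ^ (CARD('n) - b)) x y = spray F (\<lambda>x y. det (?M x y)) x y"
          by (rule L.spray_local[OF xy]) (use charpoly in \<open>simp add: eqOn_def\<close>)
        moreover have "spray F (\<lambda>x y. \<Sum>b\<le>CARD('n). ga b x y * t ^ (CARD('n) - b)) x y
            = (\<Sum>b\<le>CARD('n). spray F (ga b) x y * t ^ (CARD('n) - b))"
        proof -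
          have "spray F (\<lambda>x y. \<Sum>b\<le>CARD('n). ga b x y * t ^ (CARD('n) - b)) x y
              = (\<Sum>b\<le>CARD('n). spray F (\<lambda>x y. ga b x y * t ^ (CARD('n) - b)) x y)"
            by (rule SP.D_sum) (auto intro!: S_mult[OF openU] Sga S_const[OF openU])
          also have "\<dots> = (\<Sum>b\<le>CARD('n). spray F (ga b) x y * t ^ (CARD('n) - b))"
            by (rule sum.cong[OF refl]) (simp add: SP.D_mult[OF Sga S_const[OF openU]] SP.D_const)
          finally show ?thesis .
        qed
        ultimately show ?thesis using D0 by simp
      qed
      then have "spray F (ga a) x y = 0" using coef_unique[OF _ an, of "\<lambda>b. spray F (ga b) x y" "\<lambda>b. 0"] by blast
      then show ?thesis .
    qed
    fix c :: real assume c: "c > 0"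
    show "trace (matpow (Emat F x (c *\<^sub>R y)) a) = trace (matpow (Emat F x y) a)"
      by (simp add: L.Emat_hom[OF xy c])
    have cy: "c *\<^sub>R y \<noteq> 0" using c y by simp
    show "ga a x (c *\<^sub>R y) = ga a x y"
    proof (rule coef_unique[OF _ an], rule allI)
      fix t :: real
      have "(\<Sum>b\<le>CARD('n). ga b x (c *\<^sub>R y) * t ^ (CARD('n) - b)) = det (Emat F x (c *\<^sub>R y) + t *\<^sub>R mat 1)"
        using charpoly x cy by simp
      also have "\<dots> = det (Emat F x y + t *\<^sub>R mat 1)" by (simp add: L.Emat_hom[OF xy c])
      also have "\<dots> = (\<Sum>b\<le>CARD('n). ga b x y * t ^ (CARD('n) - b))"
        using charpoly x y by simp
      finally show "(\<Sum>b\<le>CARD('n). ga b x (c *\<^sub>R y) * t ^ (CARD('n) - b)) = (\<Sum>b\<le>CARD('n). ga b x y * t ^ (CARD('n) - b))" .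
    qed
  qed
qed


end
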